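(* Let $h=h^*\in C^\infty(\mathbb{T}_\theta^4)$. Let $\mathcal{H}_\varphi$ be the Hilbert space completion of $C(\mathbb{T}_\theta^4)$ with respect to $(a,b)_\varphi=\varphi_0(b^*a\,e^{-2h})$, and let $\mathcal{K}$ be the completion of $C(\mathbb{T}_\theta^4)$ with respect to $(a,b)_1=\varphi_0(b^*a\,e^{-h})$. Let $d:\mathcal{H}_\varphi\to\mathcal{K}^{\oplus 4}$ be the operator with domain $C^\infty(\mathbb{T}_\theta^4)$ given by $d(a)=(\partial_1 a,\partial_2 a,\bar\partial_1 a,\bar\partial_2 a)$, where $$\partial_1=\delta_1-i\delta_3,\quad \partial_2=\delta_2-i\delta_4,\quad \bar\partial_1=\delta_1+i\delta_3,\quad \bar\partial_2=\delta_2+i\delta_4.$$ Then the operator $d^*d$ acting in $\mathcal{H}_\varphi$ is anti-unitarily equivalent (via an anti-unitary map preserving $C^\infty(\mathbb{T}_\theta^4)$) to the operator $$e^{h}\bar\partial_1 e^{-h}\partial_1 e^{h}+e^{h}\partial_1 e^{-h}\bar\partial_1 e^{h}+e^{h}\bar\partial_2 e^{-h}\partial_2 e^{h}+e^{h}\partial_2 e^{-h}\bar\partial_2 e^{h}$$ acting in $\mathcal{H}_0$ on the domain $C^\infty(\mathbb{T}_\theta^4)$, where $e^{\pm h}$ act by left multiplication.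
   Context: Let $\theta=(\theta_{kl})$ be a real skew-symmetric $4\times 4$ matrix. $C(\mathbb{T}_\theta^4)$ is the universal unital $C^*$-algebra generated by unitaries $U_1,\dots,U_4$ with $U_kU_l=e^{2\pi i\theta_{kl}}U_lU_k$. For $\ell\in\mathbb{Z}^4$ write $U^\ell=U_1^{\ell_1}U_2^{\ell_2}U_3^{\ell_3}U_4^{\ell_4}$. $C^\infty(\mathbb{T}_\theta^4)$ is the dense $*$-subalgebra of elements $\sum_{\ell\in\mathbb{Z}^4}a_\ell U^\ell$ with rapidly decreasing coefficients $(a_\ell)$. $\varphi_0$ is the faithful tracial state with $\varphi_0(\sum a_\ell U^\ell)=a_0$. $\delta_1,\dots,\delta_4$ are the commuting derivations of $C^\infty(\mathbb{T}_\theta^4)$ determined by $\delta_j(U_k)=\delta_{jk}U_k$ (Kronecker delta); they satisfy $\delta_j(a^* )=-\delta_j(a)^*$ and $\varphi_0\circ\delta_j=0$. $\mathcal{H}_0$ is the Hilbert space completion of $C(\mathbb{T}_\theta^4)$ with respect to $(a,b)=\varphi_0(b^*a)$. *)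

theory Defs
  imports "HOL-Analysis.Analysis"
begin

text \<open>Concrete model of the smooth noncommutative 4-torus.
  Lattice points of Z^4 are functions nat => int vanishing outside {1..4};
  an element sum_l a_l U^l is represented by its coefficient function.\<close>

type_synonym lat = "nat \<Rightarrow> int"
type_synonym nct = "lat \<Rightarrow> complex"

definition lat4 :: "lat set" where
  "lat4 = {l. \<forall>k. k \<notin> {1..4} \<longrightarrow> l k = 0}"

definition lsub :: "lat \<Rightarrow> lat \<Rightarrow> lat" where
  "lsub n l = (\<lambda>k. n k - l k)"

definition lneg :: "lat \<Rightarrow> lat" where
  "lneg n = (\<lambda>k. - n k)"

definition lzero :: lat where
  "lzero = (\<lambda>k. 0)"

definition lnorm :: "lat \<Rightarrow> int" where
  "lnorm l = (\<Sum>k\<in>{1..4}. \<bar>l k\<bar>)"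

text \<open>Rapidly decreasing coefficients: the elements of C^infty(T_theta^4).\<close>
definition smooth :: "nct \<Rightarrow> bool" where
  "smooth a \<longleftrightarrow> (\<forall>l. l \<notin> lat4 \<longrightarrow> a l = 0) \<and>
     (\<forall>p::nat. \<exists>C::real. \<forall>l. (1 + real_of_int (lnorm l)) ^ p * cmod (a l) \<le> C)"

definition Csm :: "nct set" where
  "Csm = {a. smooth a}"

text \<open>U^l U^m = twist l m U^(l+m), from U_k U_j = e^(2 pi i theta_kj) U_j U_k.\<close>
definition twist :: "(nat \<Rightarrow> nat \<Rightarrow> real) \<Rightarrow> lat \<Rightarrow> lat \<Rightarrow> complex" where
  "twist \<theta> l m = cis (2 * pi * (\<Sum>j\<in>{1..4}. \<Sum>k\<in>{j<..4}. \<theta> k j * of_int (l k) * of_int (m j)))"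

definition tmult :: "(nat \<Rightarrow> nat \<Rightarrow> real) \<Rightarrow> nct \<Rightarrow> nct \<Rightarrow> nct" where
  "tmult \<theta> a b = (\<lambda>n. if n \<in> lat4
      then (\<Sum>\<^sub>\<infinity>l\<in>lat4. a l * b (lsub n l) * twist \<theta> l (lsub n l)) else 0)"

text \<open>(U^l)^* = (U^l)^(-1) = cnj (twist (-l) l) U^(-l).\<close>
definition tstar :: "(nat \<Rightarrow> nat \<Rightarrow> real) \<Rightarrow> nct \<Rightarrow> nct" where
  "tstar \<theta> a = (\<lambda>n. cnj (a (lneg n)) * cnj (twist \<theta> n (lneg n)))"

definition tone :: nct where
  "tone = (\<lambda>l. if l = lzero then 1 else 0)"

definition tadd :: "nct \<Rightarrow> nct \<Rightarrow> nct" where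
  "tadd a b = (\<lambda>l. a l + b l)"

definition tscale :: "complex \<Rightarrow> nct \<Rightarrow> nct" where
  "tscale c a = (\<lambda>l. c * a l)"

fun tpow :: "(nat \<Rightarrow> nat \<Rightarrow> real) \<Rightarrow> nct \<Rightarrow> nat \<Rightarrow> nct" where
  "tpow \<theta> a 0 = tone"
| "tpow \<theta> a (Suc n) = tmult \<theta> a (tpow \<theta> a n)"

text \<open>Exponential e^a = sum_n a^n / n! (the series converges absolutely in the
  l^1 (twisted convolution) Banach algebra, hence coefficientwise, and agrees
  with the C*-algebraic exponential).\<close>
definition texp :: "(nat \<Rightarrow> nat \<Rightarrow> real) \<Rightarrow> nct \<Rightarrow> nct" where
  "texp \<theta> a = (\<lambda>l. \<Sum>n. tpow \<theta> a n l / of_nat (fact n))"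

definition phi0 :: "nct \<Rightarrow> complex" where
  "phi0 a = a lzero"

definition delta :: "nat \<Rightarrow> nct \<Rightarrow> nct" where
  "delta j a = (\<lambda>l. of_int (l j) * a l)"

definition dd1 :: "nct \<Rightarrow> nct" where
  "dd1 a = (\<lambda>l. delta 1 a l - \<i> * delta 3 a l)"
definition dd2 :: "nct \<Rightarrow> nct" where
  "dd2 a = (\<lambda>l. delta 2 a l - \<i> * delta 4 a l)"
definition dbar1 :: "nct \<Rightarrow> nct" where
  "dbar1 a = (\<lambda>l. delta 1 a l + \<i> * delta 3 a l)"
definition dbar2 :: "nct \<Rightarrow> nct" where
  "dbar2 a = (\<lambda>l. delta 2 a l + \<i> * delta 4 a l)"

text \<open>Inner products on C^infty (restrictions of those of the completions).\<close>
definition inner0 :: "(nat \<Rightarrow> nat \<Rightarrow> real) \<Rightarrow> nct \<Rightarrow> nct \<Rightarrow> complex" where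
  "inner0 \<theta> a b = phi0 (tmult \<theta> (tstar \<theta> b) a)"

definition inner_phi :: "(nat \<Rightarrow> nat \<Rightarrow> real) \<Rightarrow> nct \<Rightarrow> nct \<Rightarrow> nct \<Rightarrow> complex" where
  "inner_phi \<theta> h a b = phi0 (tmult \<theta> (tmult \<theta> (tstar \<theta> b) a) (texp \<theta> (tscale (-2) h)))"

definition inner1 :: "(nat \<Rightarrow> nat \<Rightarrow> real) \<Rightarrow> nct \<Rightarrow> nct \<Rightarrow> nct \<Rightarrow> complex" where
  "inner1 \<theta> h a b = phi0 (tmult \<theta> (tmult \<theta> (tstar \<theta> b) a) (texp \<theta> (tscale (-1) h)))"

definition dop :: "nct \<Rightarrow> nct list" where
  "dop a = [dd1 a, dd2 a, dbar1 a, dbar2 a]"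

definition innerK4 :: "(nat \<Rightarrow> nat \<Rightarrow> real) \<Rightarrow> nct \<Rightarrow> nct list \<Rightarrow> nct list \<Rightarrow> complex" where
  "innerK4 \<theta> h xs ys = (\<Sum>i<4. inner1 \<theta> h (xs ! i) (ys ! i))"

definition Sop :: "(nat \<Rightarrow> nat \<Rightarrow> real) \<Rightarrow> nct \<Rightarrow> nct \<Rightarrow> nct" where
  "Sop \<theta> h a =
    (let eh = texp \<theta> h; emh = texp \<theta> (tscale (-1) h);
         L = tmult \<theta>;
         term = (\<lambda>D1 D2. L eh (D1 (L emh (D2 (L eh a)))))
     in tadd (tadd (term dbar1 dd1) (term dd1 dbar1)) (tadd (term dbar2 dd2) (term dd2 dbar2)))"

end

theory Submission imports Defs begin

definition wt :: "nat \<Rightarrow> lat \<Rightarrow> real" where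
  "wt p l = (1 + real_of_int (lnorm l)) ^ p"

definition ladd :: "lat \<Rightarrow> lat \<Rightarrow> lat" where
  "ladd l m = (\<lambda>k. l k + m k)"

lemma lnorm_nonneg: "0 \<le> lnorm l"
  unfolding lnorm_def by (simp add: sum_nonneg)

lemma wt_ge1: "1 \<le> wt p l"
  unfolding wt_def using lnorm_nonneg[of l] by simp

lemma wt_pos: "0 < wt p l"
  using wt_ge1[of p l] by simp

lemma wt_add: "wt (p + q) l = wt p l * wt q l"
  unfolding wt_def by (simp add: power_add)

lemma wt_0[simp]: "wt 0 l = 1"
  unfolding wt_def by simp

lemma lnorm_ladd: "lnorm (ladd l m) \<le> lnorm l + lnorm m"
  unfolding lnorm_def ladd_def
  by (simp add: sum.distrib[symmetric] sum_mono abs_triangle_ineq)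

lemma ladd_lsub: "ladd l (lsub n l) = n"
  unfolding ladd_def lsub_def by auto

lemma lnorm_lsub_le: "lnorm n \<le> lnorm l + lnorm (lsub n l)"
  using lnorm_ladd[of l "lsub n l"] by (simp add: ladd_lsub)

lemma lnorm_lneg[simp]: "lnorm (lneg l) = lnorm l"
  unfolding lnorm_def lneg_def by simp

lemma lnorm_lzero[simp]: "lnorm lzero = 0"
  unfolding lnorm_def lzero_def by simp

lemma wt_lneg[simp]: "wt p (lneg l) = wt p l"
  unfolding wt_def by simp

lemma wt_lzero[simp]: "wt p lzero = 1"
  unfolding wt_def by simp

lemma wt_sub: "wt p n \<le> wt p l * wt p (lsub n l)"
proof -
  have "1 + real_of_int (lnorm n) \<le> (1 + real_of_int (lnorm l)) * (1 + real_of_int (lnorm (lsub n l)))"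
    using lnorm_lsub_le[of n l] lnorm_nonneg[of l] lnorm_nonneg[of "lsub n l"]
    by (simp add: algebra_simps) (smt (verit) mult_nonneg_nonneg of_int_add of_int_le_iff of_int_nonneg)
  hence "(1 + real_of_int (lnorm n))^p \<le> ((1 + real_of_int (lnorm l)) * (1 + real_of_int (lnorm (lsub n l))))^p"
    using lnorm_nonneg[of n] by (intro power_mono) auto
  thus ?thesis unfolding wt_def by (simp add: power_mult_distrib)
qed

lemma lsub_lat4: "n \<in> lat4 \<Longrightarrow> l \<in> lat4 \<Longrightarrow> lsub n l \<in> lat4"
  unfolding lat4_def lsub_def by auto
lemma lneg_lat4: "n \<in> lat4 \<Longrightarrow> lneg n \<in> lat4"
  unfolding lat4_def lneg_def by auto
lemma lneg_lat4_iff[simp]: "lneg n \<in> lat4 \<longleftrightarrow> n \<in> lat4"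
  unfolding lat4_def lneg_def by auto
lemma lzero_lat4[simp]: "lzero \<in> lat4"
  unfolding lat4_def lzero_def by auto
lemma ladd_lat4: "n \<in> lat4 \<Longrightarrow> l \<in> lat4 \<Longrightarrow> ladd n l \<in> lat4"
  unfolding lat4_def ladd_def by auto
lemma lneg_lneg[simp]: "lneg (lneg n) = n"
  unfolding lneg_def by auto
lemma lsub_lsub[simp]: "lsub n (lsub n l) = l"
  unfolding lsub_def by auto
lemma lneg_eq_lzero_iff[simp]: "lneg n = lzero \<longleftrightarrow> n = lzero"
  unfolding lneg_def lzero_def by (auto simp: fun_eq_iff)
lemma lsub_self[simp]: "lsub n n = lzero"
  unfolding lsub_def lzero_def by auto
lemma lsub_lzero[simp]: "lsub n lzero = n"
  unfolding lsub_def lzero_def by auto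
lemma lneg_lzero[simp]: "lneg lzero = lzero"
  unfolding lneg_def lzero_def by auto
lemma lsub_eq_lzero_iff: "lsub n l = lzero \<longleftrightarrow> l = n"
  unfolding lsub_def lzero_def by (auto simp: fun_eq_iff)

subsection \<open>Summability over the lattice\<close>

lemma summable_prod_nonneg:
  fixes f :: "'a \<Rightarrow> real" and g :: "'b \<Rightarrow> real"
  assumes "f summable_on A" "g summable_on B" "\<And>x. x \<in> A \<Longrightarrow> 0 \<le> f x" "\<And>y. y \<in> B \<Longrightarrow> 0 \<le> g y"
  shows "(\<lambda>(x,y). f x * g y) summable_on (A \<times> B)"
proof -
  have "(\<lambda>z. f (fst z) * g (snd z)) summable_on Sigma A (\<lambda>_. B)"
  proof (rule summable_on_SigmaI[where g = "\<lambda>x. f x * infsum g B"])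
    fix x assume "x \<in> A"
    show "((\<lambda>y. f (fst (x, y)) * g (snd (x, y))) has_sum f x * infsum g B) B"
      using has_sum_cmult_right[OF has_sum_infsum[OF assms(2)], of "f x"] by simp
  next
    show "(\<lambda>x. f x * infsum g B) summable_on A"
      using summable_on_cmult_left[OF assms(1)] by simp
  next
    fix x y assume "x \<in> A" "y \<in> B" thus "0 \<le> f (fst (x, y)) * g (snd (x, y))"
      using assms by simp
  qed
  thus ?thesis by (simp add: case_prod_unfold)
qed

definition F2 :: "int \<Rightarrow> real" where "F2 z = 1 / (1 + real_of_int \<bar>z\<bar>)^2"

lemma F2_nonneg: "0 \<le> F2 z" unfolding F2_def by simp

lemma summable_nat_F: "(\<lambda>n::nat. 1 / (1 + real n)^2) summable_on UNIV"
proof -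
  have "summable (\<lambda>n::nat. inverse (real n ^ 2))"
    by (rule inverse_power_summable) auto
  hence "summable (\<lambda>n::nat. inverse (real (Suc n) ^ 2))"
    by (subst summable_Suc_iff)
  hence "summable (\<lambda>n::nat. 1 / (1 + real n)^2)"
    by (simp add: divide_inverse add.commute)
  thus ?thesis by (subst summable_on_UNIV_nonneg_real_iff) auto
qed

lemma summable_F2: "F2 summable_on UNIV"
proof -
  have U: "(UNIV::int set) = range int \<union> range (\<lambda>n. - int n - 1)"
  proof -
    { fix z :: int
      have "z \<in> range int \<union> range (\<lambda>n. - int n - 1)"
      proof (cases "z \<ge> 0")
        case True thus ?thesis by (metis UnI1 nonneg_int_cases rangeI)
      next
        case False hence "z = - int (nat (-z-1)) - 1" by simp
        thus ?thesis by blast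
      qed }
    thus ?thesis by auto
  qed
  have s1: "F2 summable_on range int"
    by (subst summable_on_reindex) (auto simp: o_def F2_def intro: summable_nat_F)
  have "F2 summable_on range (\<lambda>n. - int n - 1)"
  proof (subst summable_on_reindex)
    show "inj_on (\<lambda>n. - int n - 1) UNIV" by (auto simp: inj_on_def)
    have "(F2 \<circ> (\<lambda>n. - int n - 1)) = (\<lambda>n::nat. 1 / (1 + real (Suc n))^2)"
      by (auto simp: F2_def fun_eq_iff)
    moreover have "(\<lambda>n::nat. 1 / (1 + real (Suc n))^2) summable_on UNIV"
      by (rule summable_on_comparison_test[OF summable_nat_F]) (auto simp: divide_simps power_mono)
    ultimately show "(F2 \<circ> (\<lambda>n. - int n - 1)) summable_on UNIV" by simp
  qed
  hence "F2 summable_on (range int \<union> range (\<lambda>n. - int n - 1))"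
    by (intro summable_on_Un_disjoint s1) auto
  thus ?thesis using U by simp
qed

definition gw :: "lat \<Rightarrow> real" where "gw l = 1 / wt 8 l"

lemma gw_pos: "0 < gw l" unfolding gw_def using wt_pos[of 8 l] by simp

lemma gw_le1: "gw l \<le> 1" unfolding gw_def using wt_ge1[of 8 l] by simp

lemma summable_gw: "gw summable_on lat4"
proof -
  define e :: "lat \<Rightarrow> int \<times> int \<times> int \<times> int" where "e l = (l 1, l 2, l 3, l 4)" for l
  define G where "G = (\<lambda>(a::int,b::int,c::int,d::int). F2 a * (F2 b * (F2 c * F2 d)))"
  have inj: "inj_on e lat4"
  proof (rule inj_onI)
    fix x y assume x: "x \<in> lat4" and y: "y \<in> lat4" and "e x = e y"
    hence eq: "x 1 = y 1" "x 2 = y 2" "x 3 = y 3" "x 4 = y 4" by (auto simp: e_def)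
    show "x = y"
    proof
      fix k show "x k = y k"
      proof (cases "k \<in> {1..4}")
        case True hence "k = 1 \<or> k = 2 \<or> k = 3 \<or> k = 4" by auto
        thus ?thesis using eq by auto
      next
        case False thus ?thesis using x y by (auto simp: lat4_def)
      qed
    qed
  qed
  have sG: "G summable_on UNIV"
  proof -
    have a: "(\<lambda>(c,d). F2 c * F2 d) summable_on (UNIV \<times> UNIV)"
      by (rule summable_prod_nonneg[OF summable_F2 summable_F2 F2_nonneg F2_nonneg])
    have b: "(\<lambda>(b,cd). F2 b * (case cd of (c,d) \<Rightarrow> F2 c * F2 d)) summable_on (UNIV \<times> (UNIV \<times> UNIV))"
      by (rule summable_prod_nonneg[OF summable_F2 a F2_nonneg]) (auto simp: F2_nonneg)
    have c: "(\<lambda>(a,bcd). F2 a * (case bcd of (b,cd) \<Rightarrow> F2 b * (case cd of (c,d) \<Rightarrow> F2 c * F2 d))) summable_on (UNIV \<times> (UNIV \<times> (UNIV \<times> UNIV)))"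
      by (rule summable_prod_nonneg[OF summable_F2 b F2_nonneg]) (auto simp: F2_nonneg)
    show ?thesis using c unfolding G_def by (simp add: case_prod_unfold)
  qed
  hence "G summable_on e ` lat4" by (rule summable_on_subset) auto
  hence sGe: "(G \<circ> e) summable_on lat4" using summable_on_reindex[OF inj] by blast
  show ?thesis
  proof (rule summable_on_comparison_test[OF sGe])
    fix l assume l: "l \<in> lat4"
    show "0 \<le> gw l" using gw_pos[of l] by simp
    let ?L = "1 + real_of_int (lnorm l)"
    have ln: "lnorm l = \<bar>l 1\<bar> + \<bar>l 2\<bar> + \<bar>l 3\<bar> + \<bar>l 4\<bar>"
      unfolding lnorm_def by (simp add: numeral_eq_Suc atLeastAtMostSuc_conv)
    have le: "1 + real_of_int \<bar>l k\<bar> \<le> ?L" if "k \<in> {1,2,3,4}" for k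
      using that by (auto simp: ln)
    have pos: "0 < 1 + real_of_int \<bar>l k\<bar>" for k by (smt (verit) of_int_nonneg abs_ge_zero)
    have "(1 + real_of_int \<bar>l 1\<bar>)^2 * ((1 + real_of_int \<bar>l 2\<bar>)^2 * ((1 + real_of_int \<bar>l 3\<bar>)^2 * (1 + real_of_int \<bar>l 4\<bar>)^2))
          \<le> ?L^2 * (?L^2 * (?L^2 * ?L^2))"
      by (intro mult_mono power_mono le) (auto simp: pos less_imp_le)
    also have "\<dots> = wt 8 l" unfolding wt_def by (simp add: power_add[symmetric])
    finally have "gw l \<le> 1 / ((1 + real_of_int \<bar>l 1\<bar>)^2 * ((1 + real_of_int \<bar>l 2\<bar>)^2 * ((1 + real_of_int \<bar>l 3\<bar>)^2 * (1 + real_of_int \<bar>l 4\<bar>)^2)))"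
      unfolding gw_def using pos wt_pos[of 8 l] by (intro divide_left_mono) (auto intro!: mult_pos_pos)
    thus "gw l \<le> (G \<circ> e) l" by (simp add: G_def e_def F2_def)
  qed
qed


lemma wt_nonneg[simp]: "0 \<le> wt p l"
  using wt_pos[of p l] by simp

lemma cplx_summable_cmp:
  fixes f :: "'a \<Rightarrow> complex" and g :: "'a \<Rightarrow> real"
  assumes "g summable_on A" "\<And>x. x \<in> A \<Longrightarrow> cmod (f x) \<le> g x"
  shows "f summable_on A"
proof -
  have "(\<lambda>x. norm (f x)) summable_on A"
    by (rule summable_on_comparison_test[OF assms(1)]) (use assms(2) in auto)
  thus ?thesis by (simp add: summable_on_iff_abs_summable_on_complex)
qed

lemma cplx_abs_summable:
  fixes f :: "'a \<Rightarrow> complex"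
  assumes "f summable_on A" shows "(\<lambda>x. cmod (f x)) summable_on A"
  using assms by (simp add: summable_on_iff_abs_summable_on_complex)

lemma smooth_iff: "smooth a \<longleftrightarrow> (\<forall>l. l \<notin> lat4 \<longrightarrow> a l = 0) \<and> (\<forall>p. \<exists>C. \<forall>l. wt p l * cmod (a l) \<le> C)"
  unfolding smooth_def wt_def by simp

lemma smooth_supp: "smooth a \<Longrightarrow> l \<notin> lat4 \<Longrightarrow> a l = 0"
  unfolding smooth_def by auto

lemma smooth_bound: "smooth a \<Longrightarrow> \<exists>C. \<forall>l. wt p l * cmod (a l) \<le> C"
  unfolding smooth_iff by auto

lemma smooth_decay:
  assumes "smooth a" shows "\<exists>C. \<forall>l. wt p l * cmod (a l) \<le> C * gw l"
proof -
  obtain C where C: "\<And>l. wt (p + 8) l * cmod (a l) \<le> C" using smooth_bound[OF assms] by blast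
  { fix l
    have "wt p l * cmod (a l) = (wt (p+8) l * cmod (a l)) * gw l"
      unfolding gw_def wt_add using wt_pos[of 8 l] by (simp add: field_simps)
    also have "\<dots> \<le> C * gw l" using C[of l] gw_pos[of l] by (intro mult_right_mono) auto
    finally have "wt p l * cmod (a l) \<le> C * gw l" . }
  thus ?thesis by blast
qed

lemma smooth_wsummable:
  assumes "smooth a" shows "(\<lambda>l. wt p l * cmod (a l)) summable_on lat4"
proof -
  obtain C where C: "\<And>l. wt p l * cmod (a l) \<le> C * gw l" using smooth_decay[OF assms] by blast
  show ?thesis
    by (rule summable_on_comparison_test[OF summable_on_cmult_right[OF summable_gw, of C]])
       (use C in \<open>auto intro!: mult_nonneg_nonneg\<close>)
qed

lemma smooth_abs_summable: "smooth a \<Longrightarrow> (\<lambda>l. cmod (a l)) summable_on lat4"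
  using smooth_wsummable[of a 0] by simp

lemma smooth_summable: "smooth a \<Longrightarrow> a summable_on lat4"
  using smooth_abs_summable by (simp add: summable_on_iff_abs_summable_on_complex)

lemma smooth_bounded: "smooth a \<Longrightarrow> \<exists>C. \<forall>l. cmod (a l) \<le> C"
  using smooth_bound[of a 0] by simp

definition wsum :: "nat \<Rightarrow> nct \<Rightarrow> real" where
  "wsum p a = infsum (\<lambda>l. wt p l * cmod (a l)) lat4"

lemma wsum_nonneg: "0 \<le> wsum p a"
  unfolding wsum_def by (rule infsum_nonneg) (simp add: wt_pos less_imp_le)

lemma norm_twist[simp]: "cmod (twist \<theta> l m) = 1"
  unfolding twist_def by simp

lemma conv_summable:
  assumes a: "smooth a" and b: "\<And>m. cmod (b m) \<le> B"
  shows "(\<lambda>l. a l * b (lsub n l) * twist \<theta> l (lsub n l)) summable_on lat4"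
proof (rule cplx_summable_cmp[OF summable_on_cmult_left[OF smooth_abs_summable[OF a], of B]])
  fix l show "cmod (a l * b (lsub n l) * twist \<theta> l (lsub n l)) \<le> cmod (a l) * B"
    by (simp add: norm_mult b mult_left_mono)
qed

lemma conv_bound:
  assumes a: "smooth a" and b: "\<And>m. wt p m * cmod (b m) \<le> B"
  shows "wt p n * cmod (tmult \<theta> a b n) \<le> wsum p a * B"
proof -
  have B0: "0 \<le> B" using b[of lzero] by (meson order_trans mult_nonneg_nonneg wt_nonneg norm_ge_zero)
  have bb: "cmod (b m) \<le> B" for m
  proof -
    have "cmod (b m) \<le> wt p m * cmod (b m)"
      using mult_right_mono[OF wt_ge1[of p m] norm_ge_zero[of "b m"]] by simp
    thus ?thesis using b[of m] by linarith
  qed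
  show ?thesis
  proof (cases "n \<in> lat4")
    case False thus ?thesis using B0 wsum_nonneg by (simp add: tmult_def)
  next
    case True
    let ?f = "\<lambda>l. a l * b (lsub n l) * twist \<theta> l (lsub n l)"
    have fs: "?f summable_on lat4" by (rule conv_summable[OF a bb])
    have fa: "(\<lambda>l. cmod (?f l)) summable_on lat4" by (rule cplx_abs_summable[OF fs])
    have "wt p n * cmod (tmult \<theta> a b n) = wt p n * cmod (infsum ?f lat4)"
      using True by (simp add: tmult_def)
    also have "\<dots> \<le> wt p n * infsum (\<lambda>l. cmod (?f l)) lat4"
      by (intro mult_left_mono norm_infsum_bound fa wt_nonneg)
    also have "\<dots> = infsum (\<lambda>l. wt p n * cmod (?f l)) lat4"
      by (simp add: infsum_cmult_right')
    also have "\<dots> \<le> infsum (\<lambda>l. wt p l * cmod (a l) * B) lat4"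
    proof (rule infsum_mono)
      show "(\<lambda>l. wt p n * cmod (?f l)) summable_on lat4" by (rule summable_on_cmult_right[OF fa])
      show "(\<lambda>l. wt p l * cmod (a l) * B) summable_on lat4"
        by (rule summable_on_cmult_left[OF smooth_wsummable[OF a]])
      fix l
      have "wt p n * cmod (?f l) = wt p n * (cmod (a l) * cmod (b (lsub n l)))"
        by (simp add: norm_mult)
      also have "\<dots> \<le> (wt p l * wt p (lsub n l)) * (cmod (a l) * cmod (b (lsub n l)))"
        by (intro mult_right_mono wt_sub) auto
      also have "\<dots> = (wt p l * cmod (a l)) * (wt p (lsub n l) * cmod (b (lsub n l)))"
        by (simp add: mult_ac)
      also have "\<dots> \<le> (wt p l * cmod (a l)) * B"
        by (intro mult_left_mono b) (simp add: wt_pos less_imp_le)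
      finally show "wt p n * cmod (?f l) \<le> wt p l * cmod (a l) * B" .
    qed
    also have "\<dots> = wsum p a * B" unfolding wsum_def by (simp add: infsum_cmult_left')
    finally show ?thesis .
  qed
qed

lemma smooth_tmult: "smooth a \<Longrightarrow> smooth b \<Longrightarrow> smooth (tmult \<theta> a b)"
  unfolding smooth_iff[of "tmult \<theta> a b"]
proof (intro conjI allI impI)
  fix l assume "l \<notin> lat4" thus "tmult \<theta> a b l = 0" by (simp add: tmult_def)
next
  fix p assume a: "smooth a" and b: "smooth b"
  obtain B where "\<And>m. wt p m * cmod (b m) \<le> B" using smooth_bound[OF b] by blast
  thus "\<exists>C. \<forall>l. wt p l * cmod (tmult \<theta> a b l) \<le> C" using conv_bound[OF a] by blast
qed

lemma smooth_tadd: "smooth a \<Longrightarrow> smooth b \<Longrightarrow> smooth (tadd a b)"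
  unfolding smooth_iff[of "tadd a b"]
proof (intro conjI allI impI)
  fix l assume "smooth a" "smooth b" "l \<notin> lat4" thus "tadd a b l = 0" by (simp add: tadd_def smooth_supp)
next
  fix p assume a: "smooth a" and b: "smooth b"
  obtain A where A: "\<And>m. wt p m * cmod (a m) \<le> A" using smooth_bound[OF a] by blast
  obtain B where B: "\<And>m. wt p m * cmod (b m) \<le> B" using smooth_bound[OF b] by blast
  { fix l
    have "wt p l * cmod (tadd a b l) \<le> wt p l * (cmod (a l) + cmod (b l))"
      unfolding tadd_def by (intro mult_left_mono norm_triangle_ineq wt_nonneg)
    also have "\<dots> \<le> A + B" using A[of l] B[of l] by (simp add: distrib_left)
    finally have "wt p l * cmod (tadd a b l) \<le> A + B" . }
  thus "\<exists>C. \<forall>l. wt p l * cmod (tadd a b l) \<le> C" by blast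
qed

lemma smooth_tscale: "smooth a \<Longrightarrow> smooth (tscale c a)"
  unfolding smooth_iff[of "tscale c a"]
proof (intro conjI allI impI)
  fix l assume "smooth a" "l \<notin> lat4" thus "tscale c a l = 0" by (simp add: tscale_def smooth_supp)
next
  fix p assume a: "smooth a"
  obtain A where A: "\<And>m. wt p m * cmod (a m) \<le> A" using smooth_bound[OF a] by blast
  { fix l
    have "wt p l * cmod (tscale c a l) = cmod c * (wt p l * cmod (a l))"
      by (simp add: tscale_def norm_mult mult_ac)
    also have "\<dots> \<le> cmod c * A" using A[of l] by (intro mult_left_mono) auto
    finally have "wt p l * cmod (tscale c a l) \<le> cmod c * A" . }
  thus "\<exists>C. \<forall>l. wt p l * cmod (tscale c a l) \<le> C" by blast
qed

lemma smooth_tstar: "smooth a \<Longrightarrow> smooth (tstar \<theta> a)"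
  unfolding smooth_iff[of "tstar \<theta> a"]
proof (intro conjI allI impI)
  fix l assume "smooth a" "l \<notin> lat4" thus "tstar \<theta> a l = 0" by (simp add: tstar_def smooth_supp)
next
  fix p assume a: "smooth a"
  obtain A where A: "\<And>m. wt p m * cmod (a m) \<le> A" using smooth_bound[OF a] by blast
  { fix l
    have "wt p l * cmod (tstar \<theta> a l) = wt p (lneg l) * cmod (a (lneg l))"
      by (simp add: tstar_def norm_mult)
    also have "\<dots> \<le> A" by (rule A)
    finally have "wt p l * cmod (tstar \<theta> a l) \<le> A" . }
  thus "\<exists>C. \<forall>l. wt p l * cmod (tstar \<theta> a l) \<le> C" by blast
qed

lemma smooth_tone: "smooth tone"
  unfolding smooth_iff
proof (intro conjI allI impI)
  fix l :: lat assume "l \<notin> lat4" thus "tone l = 0" by (auto simp: tone_def)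
next
  fix p show "\<exists>C. \<forall>l. wt p l * cmod (tone l) \<le> C"
    by (rule exI[of _ 1]) (auto simp: tone_def)
qed

definition mulc :: "(lat \<Rightarrow> complex) \<Rightarrow> nct \<Rightarrow> nct" where
  "mulc c a = (\<lambda>l. c l * a l)"

definition charc :: "(lat \<Rightarrow> complex) \<Rightarrow> bool" where
  "charc c \<longleftrightarrow> (\<forall>x y. c (lsub x y) = c x - c y) \<and> (\<forall>l. cmod (c l) \<le> real_of_int (lnorm l))"

lemma smooth_mulc: assumes c: "charc c" shows "smooth a \<Longrightarrow> smooth (mulc c a)"
  unfolding smooth_iff[of "mulc c a"]
proof (intro conjI allI impI)
  fix l assume "smooth a" "l \<notin> lat4" thus "mulc c a l = 0" by (simp add: mulc_def smooth_supp)
next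
  fix p assume a: "smooth a"
  obtain A where A: "\<And>m. wt (p+1) m * cmod (a m) \<le> A" using smooth_bound[OF a] by blast
  { fix l
    have "wt p l * cmod (mulc c a l) = wt p l * cmod (c l) * cmod (a l)"
      by (simp add: mulc_def norm_mult)
    also have "\<dots> \<le> wt p l * wt 1 l * cmod (a l)"
    proof -
      have "cmod (c l) \<le> real_of_int (lnorm l)" using c unfolding charc_def by blast
      hence "cmod (c l) \<le> wt 1 l" unfolding wt_def by simp
      thus ?thesis by (intro mult_right_mono mult_left_mono) auto
    qed
    also have "\<dots> = wt (p+1) l * cmod (a l)" by (simp only: wt_add)
    also have "\<dots> \<le> A" by (rule A)
    finally have "wt p l * cmod (mulc c a l) \<le> A" . }
  thus "\<exists>C. \<forall>l. wt p l * cmod (mulc c a l) \<le> C" by blast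
qed


definition tph :: "(nat \<Rightarrow> nat \<Rightarrow> real) \<Rightarrow> lat \<Rightarrow> lat \<Rightarrow> real" where
  "tph \<theta> l m = (\<Sum>j\<in>{1..4}. \<Sum>k\<in>{j<..4}. \<theta> k j * of_int (l k) * of_int (m j))"

lemma twist_tph: "twist \<theta> l m = cis (2 * pi * tph \<theta> l m)"
  unfolding twist_def tph_def ..

lemma tph_lsub1[simp]: "tph \<theta> (lsub x y) m = tph \<theta> x m - tph \<theta> y m"
  unfolding tph_def lsub_def by (simp add: algebra_simps sum_subtractf)
lemma tph_lsub2[simp]: "tph \<theta> m (lsub x y) = tph \<theta> m x - tph \<theta> m y"
  unfolding tph_def lsub_def by (simp add: algebra_simps sum_subtractf)
lemma tph_ladd1[simp]: "tph \<theta> (ladd x y) m = tph \<theta> x m + tph \<theta> y m"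
  unfolding tph_def ladd_def by (simp add: algebra_simps sum.distrib)
lemma tph_ladd2[simp]: "tph \<theta> m (ladd x y) = tph \<theta> m x + tph \<theta> m y"
  unfolding tph_def ladd_def by (simp add: algebra_simps sum.distrib)
lemma tph_lneg1[simp]: "tph \<theta> (lneg x) m = - tph \<theta> x m"
  unfolding tph_def lneg_def by (simp add: sum_negf)
lemma tph_lneg2[simp]: "tph \<theta> m (lneg x) = - tph \<theta> m x"
  unfolding tph_def lneg_def by (simp add: sum_negf)
lemma tph_lzero1[simp]: "tph \<theta> lzero m = 0"
  unfolding tph_def lzero_def by simp
lemma tph_lzero2[simp]: "tph \<theta> m lzero = 0"
  unfolding tph_def lzero_def by simp

lemma twist_lzero1[simp]: "twist \<theta> lzero m = 1" by (simp add: twist_tph)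
lemma twist_lzero2[simp]: "twist \<theta> m lzero = 1" by (simp add: twist_tph)

lemma twist_eqI: "tph \<theta> a b + tph \<theta> c d = tph \<theta> e f + tph \<theta> g h \<Longrightarrow>
   twist \<theta> a b * twist \<theta> c d = twist \<theta> e f * twist \<theta> g h"
  unfolding twist_tph cis_mult by (simp add: distrib_left[symmetric])

lemma lsub_ladd_cancel[simp]: "lsub (ladd l k) l = k"
  unfolding lsub_def ladd_def by auto
lemma ladd_lsub'[simp]: "ladd l (lsub m l) = m"
  unfolding lsub_def ladd_def by auto
lemma lsub_lsub_lsub: "lsub (lsub n l) (lsub m l) = lsub n m"
  unfolding lsub_def by auto
lemma lsub_lzero_eq_lneg: "lsub lzero l = lneg l"
  unfolding lsub_def lzero_def lneg_def by auto

lemma tmult_supp: "n \<notin> lat4 \<Longrightarrow> tmult \<theta> a b n = 0"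
  by (simp add: tmult_def)

lemma tmult_lat: "n \<in> lat4 \<Longrightarrow> tmult \<theta> a b n = (\<Sum>\<^sub>\<infinity>l\<in>lat4. a l * b (lsub n l) * twist \<theta> l (lsub n l))"
  by (simp add: tmult_def)

lemma tmult_tscale_left: "tmult \<theta> (tscale c a) b = tscale c (tmult \<theta> a b)"
  unfolding tmult_def tscale_def
  by (auto simp: fun_eq_iff mult.assoc infsum_cmult_right'[symmetric])

lemma tmult_tscale_right: "tmult \<theta> a (tscale c b) = tscale c (tmult \<theta> a b)"
  unfolding tmult_def tscale_def
  by (auto simp: fun_eq_iff infsum_cmult_right'[symmetric] mult_ac)

lemma tmult_tadd_left:
  assumes a: "smooth a" and b: "smooth b" and c: "smooth c"
  shows "tmult \<theta> (tadd a b) c = tadd (tmult \<theta> a c) (tmult \<theta> b c)"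
proof (rule ext)
  fix n
  obtain C where C: "\<And>m. cmod (c m) \<le> C" using smooth_bounded[OF c] by blast
  show "tmult \<theta> (tadd a b) c n = tadd (tmult \<theta> a c) (tmult \<theta> b c) n"
  proof (cases "n \<in> lat4")
    case False thus ?thesis by (simp add: tmult_def tadd_def)
  next
    case True
    have "tmult \<theta> (tadd a b) c n = (\<Sum>\<^sub>\<infinity>l\<in>lat4. a l * c (lsub n l) * twist \<theta> l (lsub n l) + b l * c (lsub n l) * twist \<theta> l (lsub n l))"
      using True by (simp add: tmult_lat tadd_def algebra_simps)
    also have "\<dots> = tmult \<theta> a c n + tmult \<theta> b c n"
      unfolding tmult_lat[OF True] by (rule infsum_add[OF conv_summable[OF a C] conv_summable[OF b C]])
    finally show ?thesis by (simp add: tadd_def)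
  qed
qed

lemma tmult_tadd_right:
  assumes a: "smooth a" and b: "smooth b" and c: "smooth c"
  shows "tmult \<theta> a (tadd b c) = tadd (tmult \<theta> a b) (tmult \<theta> a c)"
proof (rule ext)
  fix n
  obtain B where B: "\<And>m. cmod (b m) \<le> B" using smooth_bounded[OF b] by blast
  obtain C where C: "\<And>m. cmod (c m) \<le> C" using smooth_bounded[OF c] by blast
  show "tmult \<theta> a (tadd b c) n = tadd (tmult \<theta> a b) (tmult \<theta> a c) n"
  proof (cases "n \<in> lat4")
    case False thus ?thesis by (simp add: tmult_def tadd_def)
  next
    case True
    have "tmult \<theta> a (tadd b c) n = (\<Sum>\<^sub>\<infinity>l\<in>lat4. a l * b (lsub n l) * twist \<theta> l (lsub n l) + a l * c (lsub n l) * twist \<theta> l (lsub n l))"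
      using True by (simp add: tmult_lat tadd_def algebra_simps)
    also have "\<dots> = tmult \<theta> a b n + tmult \<theta> a c n"
      unfolding tmult_lat[OF True] by (rule infsum_add[OF conv_summable[OF a B] conv_summable[OF a C]])
    finally show ?thesis by (simp add: tadd_def)
  qed
qed

lemma infsum_single_point:
  fixes f :: "'a \<Rightarrow> complex"
  assumes "x \<in> A" "\<And>y. y \<in> A \<Longrightarrow> y \<noteq> x \<Longrightarrow> f y = 0"
  shows "infsum f A = f x"
proof -
  have "infsum f A = infsum f {x}"
    by (rule infsum_cong_neutral) (use assms in auto)
  thus ?thesis by simp
qed

lemma tmult_tone_left:
  assumes "\<And>l. l \<notin> lat4 \<Longrightarrow> a l = 0"
  shows "tmult \<theta> tone a = a"
proof (rule ext)
  fix n show "tmult \<theta> tone a n = a n"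
  proof (cases "n \<in> lat4")
    case False thus ?thesis using assms by (simp add: tmult_def)
  next
    case True
    have "tmult \<theta> tone a n = tone lzero * a (lsub n lzero) * twist \<theta> lzero (lsub n lzero)"
      unfolding tmult_lat[OF True] by (rule infsum_single_point) (auto simp: tone_def)
    thus ?thesis by (simp add: tone_def)
  qed
qed

lemma tmult_tone_right:
  assumes "\<And>l. l \<notin> lat4 \<Longrightarrow> a l = 0"
  shows "tmult \<theta> a tone = a"
proof (rule ext)
  fix n show "tmult \<theta> a tone n = a n"
  proof (cases "n \<in> lat4")
    case False thus ?thesis using assms by (simp add: tmult_def)
  next
    case True
    have "tmult \<theta> a tone n = a n * tone (lsub n n) * twist \<theta> n (lsub n n)"
      unfolding tmult_lat[OF True] by (rule infsum_single_point) (auto simp: tone_def lsub_eq_lzero_iff True)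
    thus ?thesis by (simp add: tone_def)
  qed
qed

lemma smooth_bounded0:
  assumes "smooth c" obtains C where "\<And>m. cmod (c m) \<le> C" "0 \<le> C"
proof -
  obtain C where C: "\<And>m. cmod (c m) \<le> C" using smooth_bounded[OF assms] by blast
  moreover have "0 \<le> C" using C[of lzero] norm_ge_zero order_trans by blast
  ultimately show ?thesis using that by blast
qed

lemma tmult_assoc:
  assumes a: "smooth a" and b: "smooth b" and c: "smooth c"
  shows "tmult \<theta> (tmult \<theta> a b) c = tmult \<theta> a (tmult \<theta> b c)"
proof
  fix n
  show "tmult \<theta> (tmult \<theta> a b) c n = tmult \<theta> a (tmult \<theta> b c) n"
  proof (cases "n \<in> lat4")
    case False thus ?thesis by (simp add: tmult_def)
  next
    case n: True
    define T where "T = (\<lambda>(l,k). a l * b k * c (lsub (lsub n l) k) * (twist \<theta> l k * twist \<theta> (ladd l k) (lsub (lsub n l) k)))"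
    define S where "S = (\<lambda>(m,l). a l * b (lsub m l) * twist \<theta> l (lsub m l) * (c (lsub n m) * twist \<theta> m (lsub n m)))"
    obtain Cc where Cc: "\<And>m. cmod (c m) \<le> Cc" "0 \<le> Cc" using smooth_bounded0[OF c] by blast
    obtain Cb where Cb: "\<And>m. cmod (b m) \<le> Cb" "0 \<le> Cb" using smooth_bounded0[OF b] by blast
    have Ts: "T summable_on lat4 \<times> lat4"
    proof -
      have "(\<lambda>(l,k). cmod (a l) * (cmod (b k) * Cc)) summable_on lat4 \<times> lat4"
        by (rule summable_prod_nonneg[OF smooth_abs_summable[OF a] summable_on_cmult_left[OF smooth_abs_summable[OF b]]])
           (use Cc in auto)
      thus ?thesis
        by (rule cplx_summable_cmp) (auto simp: T_def norm_mult mult.assoc intro!: mult_left_mono Cc)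
    qed
    have bij1: "\<And>x. x \<in> lat4 \<times> lat4 \<Longrightarrow> (\<lambda>(l,k). (ladd l k, l)) ((\<lambda>(m,l). (l, lsub m l)) x) = x"
      by auto
    have bij2: "\<And>x. x \<in> lat4 \<times> lat4 \<Longrightarrow> (\<lambda>(m,l). (l, lsub m l)) x \<in> lat4 \<times> lat4"
      by (auto simp: lsub_lat4)
    have bij3: "\<And>x. x \<in> lat4 \<times> lat4 \<Longrightarrow> (\<lambda>(m,l). (l, lsub m l)) ((\<lambda>(l,k). (ladd l k, l)) x) = x"
      by auto
    have bij4: "\<And>x. x \<in> lat4 \<times> lat4 \<Longrightarrow> (\<lambda>(l,k). (ladd l k, l)) x \<in> lat4 \<times> lat4"
      by (auto simp: ladd_lat4)
    have TS: "\<And>x. x \<in> lat4 \<times> lat4 \<Longrightarrow> T ((\<lambda>(m,l). (l, lsub m l)) x) = S x"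
      by (auto simp: T_def S_def lsub_lsub_lsub mult_ac)
    have Ss: "S summable_on lat4 \<times> lat4"
      using summable_on_reindex_bij_witness[of "lat4 \<times> lat4" "\<lambda>(l,k). (ladd l k, l)" "\<lambda>(m,l). (l, lsub m l)" "lat4 \<times> lat4" T S, OF bij1 bij2 bij3 bij4 TS]
        Ts by simp
    have ST: "infsum S (lat4 \<times> lat4) = infsum T (lat4 \<times> lat4)"
      by (rule infsum_reindex_bij_witness[of "lat4 \<times> lat4" "\<lambda>(l,k). (ladd l k, l)" "\<lambda>(m,l). (l, lsub m l)" "lat4 \<times> lat4" T S, OF bij1 bij2 bij3 bij4 TS])
    have "tmult \<theta> (tmult \<theta> a b) c n = (\<Sum>\<^sub>\<infinity>m\<in>lat4. tmult \<theta> a b m * (c (lsub n m) * twist \<theta> m (lsub n m)))"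
      using n by (simp add: tmult_lat mult.assoc)
    also have "\<dots> = (\<Sum>\<^sub>\<infinity>m\<in>lat4. \<Sum>\<^sub>\<infinity>l\<in>lat4. S (m,l))"
      by (rule infsum_cong) (simp add: tmult_lat S_def infsum_cmult_left')
    also have "\<dots> = infsum S (lat4 \<times> lat4)"
      using infsum_Sigma'_banach[of "\<lambda>m l. S (m,l)" lat4 "\<lambda>_. lat4"] Ss by simp
    also have "\<dots> = infsum T (lat4 \<times> lat4)" by (rule ST)
    also have "\<dots> = (\<Sum>\<^sub>\<infinity>l\<in>lat4. \<Sum>\<^sub>\<infinity>k\<in>lat4. T (l,k))"
      using infsum_Sigma'_banach[of "\<lambda>l k. T (l,k)" lat4 "\<lambda>_. lat4"] Ts by simp
    also have "\<dots> = (\<Sum>\<^sub>\<infinity>l\<in>lat4. a l * tmult \<theta> b c (lsub n l) * twist \<theta> l (lsub n l))"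
    proof (rule infsum_cong)
      fix l assume l: "l \<in> lat4"
      have "tmult \<theta> b c (lsub n l) = (\<Sum>\<^sub>\<infinity>k\<in>lat4. b k * c (lsub (lsub n l) k) * twist \<theta> k (lsub (lsub n l) k))"
        by (rule tmult_lat) (use n l in \<open>simp add: lsub_lat4\<close>)
      hence "a l * tmult \<theta> b c (lsub n l) * twist \<theta> l (lsub n l) =
           (\<Sum>\<^sub>\<infinity>k\<in>lat4. a l * (b k * c (lsub (lsub n l) k)) * (twist \<theta> k (lsub (lsub n l) k) * twist \<theta> l (lsub n l)))"
        by (simp add: infsum_cmult_left'[symmetric] infsum_cmult_right'[symmetric] mult_ac)
      also have "\<dots> = (\<Sum>\<^sub>\<infinity>k\<in>lat4. T (l,k))"
      proof (rule infsum_cong)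
        fix k
        have "twist \<theta> k (lsub (lsub n l) k) * twist \<theta> l (lsub n l) = twist \<theta> l k * twist \<theta> (ladd l k) (lsub (lsub n l) k)"
          by (rule twist_eqI) simp
        thus "a l * (b k * c (lsub (lsub n l) k)) * (twist \<theta> k (lsub (lsub n l) k) * twist \<theta> l (lsub n l)) = T (l, k)"
          by (simp add: T_def mult_ac)
      qed
      finally show "(\<Sum>\<^sub>\<infinity>k\<in>lat4. T (l,k)) = a l * tmult \<theta> b c (lsub n l) * twist \<theta> l (lsub n l)" by simp
    qed
    also have "\<dots> = tmult \<theta> a (tmult \<theta> b c) n" using n by (simp add: tmult_lat)
    finally show ?thesis .
  qed
qed

lemma twist_neg_sym: "twist \<theta> (lneg n) n = twist \<theta> n (lneg n)"
  by (simp add: twist_tph)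

lemma twist_cnj_mult[simp]: "twist \<theta> l m * cnj (twist \<theta> l m) = 1"
  by (simp add: twist_tph cis_cnj cis_mult)
lemma twist_cnj_mult'[simp]: "cnj (twist \<theta> l m) * twist \<theta> l m = 1"
  by (simp add: twist_tph cis_cnj cis_mult)

lemma tstar_tstar: "tstar \<theta> (tstar \<theta> a) = a"
proof
  fix n
  have "tstar \<theta> (tstar \<theta> a) n = a n * (twist \<theta> n (lneg n) * cnj (twist \<theta> n (lneg n)))"
    by (simp add: tstar_def twist_neg_sym mult_ac)
  thus "tstar \<theta> (tstar \<theta> a) n = a n" by simp
qed

lemma tstar_tadd: "tstar \<theta> (tadd a b) = tadd (tstar \<theta> a) (tstar \<theta> b)"
  by (simp add: tstar_def tadd_def fun_eq_iff algebra_simps)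

lemma tstar_tscale: "tstar \<theta> (tscale c a) = tscale (cnj c) (tstar \<theta> a)"
  by (simp add: tstar_def tscale_def fun_eq_iff algebra_simps)

lemma tstar_tone: "tstar \<theta> tone = tone"
  by (rule ext) (auto simp: tstar_def tone_def)

lemma lsub_lneg_l: "lsub (lneg n) l = lneg (ladd l n)"
  unfolding lsub_def lneg_def ladd_def by auto
lemma lneg_lsub_ladd: "lneg (lsub n (ladd l n)) = l"
  unfolding lsub_def lneg_def ladd_def by auto
lemma lsub_ladd_right: "lsub (ladd l n) n = l"
  unfolding lsub_def ladd_def by auto

lemma tstar_tmult:
  assumes a: "smooth a" and b: "smooth b"
  shows "tstar \<theta> (tmult \<theta> a b) = tmult \<theta> (tstar \<theta> b) (tstar \<theta> a)"
proof
  fix n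
  show "tstar \<theta> (tmult \<theta> a b) n = tmult \<theta> (tstar \<theta> b) (tstar \<theta> a) n"
  proof (cases "n \<in> lat4")
    case False thus ?thesis by (simp add: tmult_def tstar_def)
  next
    case n: True
    define g where "g l = cnj (a l) * cnj (b (lsub (lneg n) l)) * (cnj (twist \<theta> l (lsub (lneg n) l)) * cnj (twist \<theta> n (lneg n)))" for l
    define h where "h m = tstar \<theta> b m * tstar \<theta> a (lsub n m) * twist \<theta> m (lsub n m)" for m
    have "tstar \<theta> (tmult \<theta> a b) n = cnj (\<Sum>\<^sub>\<infinity>l\<in>lat4. a l * b (lsub (lneg n) l) * twist \<theta> l (lsub (lneg n) l)) * cnj (twist \<theta> n (lneg n))"
      using n unfolding tstar_def by (simp add: tmult_lat)
    also have "\<dots> = (\<Sum>\<^sub>\<infinity>l\<in>lat4. cnj (a l * b (lsub (lneg n) l) * twist \<theta> l (lsub (lneg n) l))) * cnj (twist \<theta> n (lneg n))"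
      by (simp only: infsum_cnj)
    also have "\<dots> = (\<Sum>\<^sub>\<infinity>l\<in>lat4. cnj (a l * b (lsub (lneg n) l) * twist \<theta> l (lsub (lneg n) l)) * cnj (twist \<theta> n (lneg n)))"
      by (rule infsum_cmult_left'[symmetric])
    also have "\<dots> = infsum g lat4"
      by (rule infsum_cong) (simp add: g_def mult_ac)
    finally have "tstar \<theta> (tmult \<theta> a b) n = infsum g lat4" .
    also have "\<dots> = infsum h lat4"
    proof (rule infsum_reindex_bij_witness[of lat4 "\<lambda>m. lsub m n" "\<lambda>l. ladd l n"])
      fix l assume l: "l \<in> lat4"
      show "lsub (ladd l n) n = l" by (rule lsub_ladd_right)
      show "ladd l n \<in> lat4" using l n by (rule ladd_lat4)
      have P: "cnj (twist \<theta> l (lneg (ladd l n))) * cnj (twist \<theta> n (lneg n)) =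
            cnj (twist \<theta> (ladd l n) (lneg (ladd l n))) * cnj (twist \<theta> (lsub n (ladd l n)) (lneg (lsub n (ladd l n)))) * twist \<theta> (ladd l n) (lsub n (ladd l n))"
        unfolding twist_tph cis_cnj cis_mult by (rule arg_cong[where f = cis]) (simp add: algebra_simps)
      have "h (ladd l n) = (cnj (a l) * cnj (b (lneg (ladd l n)))) *
          (cnj (twist \<theta> (ladd l n) (lneg (ladd l n))) * cnj (twist \<theta> (lsub n (ladd l n)) (lneg (lsub n (ladd l n)))) * twist \<theta> (ladd l n) (lsub n (ladd l n)))"
        by (simp add: h_def tstar_def lneg_lsub_ladd mult_ac)
      also have "\<dots> = (cnj (a l) * cnj (b (lneg (ladd l n)))) * (cnj (twist \<theta> l (lneg (ladd l n))) * cnj (twist \<theta> n (lneg n)))"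
        by (simp only: P)
      also have "\<dots> = g l" by (simp add: g_def lsub_lneg_l)
      finally show "h (ladd l n) = g l" .
    next
      fix m assume m: "m \<in> lat4"
      show "ladd (lsub m n) n = m" unfolding ladd_def lsub_def by auto
      show "lsub m n \<in> lat4" using m n by (rule lsub_lat4)
    qed
    also have "\<dots> = tmult \<theta> (tstar \<theta> b) (tstar \<theta> a) n" using n by (simp add: tmult_lat h_def[abs_def])
    finally show ?thesis .
  qed
qed

lemma phi0_tstar: "phi0 (tstar \<theta> a) = cnj (phi0 a)"
  by (simp add: phi0_def tstar_def)
lemma phi0_tadd: "phi0 (tadd a b) = phi0 a + phi0 b"
  by (simp add: phi0_def tadd_def)
lemma phi0_tscale: "phi0 (tscale c a) = c * phi0 a"
  by (simp add: phi0_def tscale_def)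

lemma phi0_comm: "phi0 (tmult \<theta> a b) = phi0 (tmult \<theta> b a)"
proof -
  have "phi0 (tmult \<theta> a b) = (\<Sum>\<^sub>\<infinity>l\<in>lat4. a l * b (lneg l) * twist \<theta> l (lneg l))"
    by (simp add: phi0_def tmult_lat lsub_lzero_eq_lneg)
  also have "\<dots> = (\<Sum>\<^sub>\<infinity>l\<in>lat4. b l * a (lneg l) * twist \<theta> l (lneg l))"
    by (rule infsum_reindex_bij_witness[of lat4 lneg lneg])
       (auto simp: twist_neg_sym[symmetric] mult_ac)
  also have "\<dots> = phi0 (tmult \<theta> b a)"
    by (simp add: phi0_def tmult_lat lsub_lzero_eq_lneg)
  finally show ?thesis .
qed

lemma charc_zero: "charc c \<Longrightarrow> c lzero = 0"
  unfolding charc_def by (metis diff_self lsub_self)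

lemma charc_lneg: "charc c \<Longrightarrow> c (lneg n) = - c n"
  using charc_zero[of c] unfolding charc_def by (metis diff_0 lsub_lzero_eq_lneg)

lemma charc_cnj: "charc c \<Longrightarrow> charc (\<lambda>l. cnj (c l))"
  unfolding charc_def by simp

lemma phi0_mulc: "charc c \<Longrightarrow> phi0 (mulc c a) = 0"
  by (simp add: phi0_def mulc_def charc_zero)

lemma mulc_tadd: "mulc c (tadd a b) = tadd (mulc c a) (mulc c b)"
  by (simp add: mulc_def tadd_def fun_eq_iff algebra_simps)

lemma mulc_tscale: "mulc c (tscale s a) = tscale s (mulc c a)"
  by (simp add: mulc_def tscale_def fun_eq_iff algebra_simps)

lemma mulc_tstar: "charc c \<Longrightarrow> mulc c (tstar \<theta> a) = tscale (-1) (tstar \<theta> (mulc (\<lambda>l. cnj (c l)) a))"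
  by (simp add: mulc_def tscale_def tstar_def fun_eq_iff charc_lneg)

lemma mulc_tmult:
  assumes c: "charc c" and a: "smooth a" and b: "smooth b"
  shows "mulc c (tmult \<theta> a b) = tadd (tmult \<theta> (mulc c a) b) (tmult \<theta> a (mulc c b))"
proof
  fix n
  show "mulc c (tmult \<theta> a b) n = tadd (tmult \<theta> (mulc c a) b) (tmult \<theta> a (mulc c b)) n"
  proof (cases "n \<in> lat4")
    case False thus ?thesis by (simp add: tmult_def mulc_def tadd_def)
  next
    case n: True
    obtain B where B: "\<And>m. cmod (b m) \<le> B" using smooth_bounded[OF b] by blast
    obtain B' where B': "\<And>m. cmod (mulc c b m) \<le> B'" using smooth_bounded[OF smooth_mulc[OF c b]] by blast
    have cn: "c n = c l + c (lsub n l)" for l using c unfolding charc_def by auto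
    have "tadd (tmult \<theta> (mulc c a) b) (tmult \<theta> a (mulc c b)) n =
       (\<Sum>\<^sub>\<infinity>l\<in>lat4. mulc c a l * b (lsub n l) * twist \<theta> l (lsub n l) + a l * mulc c b (lsub n l) * twist \<theta> l (lsub n l))"
      unfolding tadd_def tmult_lat[OF n]
      by (rule infsum_add[symmetric, OF conv_summable[OF smooth_mulc[OF c a] B] conv_summable[OF a B']])
    also have "\<dots> = (\<Sum>\<^sub>\<infinity>l\<in>lat4. c n * (a l * b (lsub n l) * twist \<theta> l (lsub n l)))"
    proof (rule infsum_cong)
      fix l show "mulc c a l * b (lsub n l) * twist \<theta> l (lsub n l) + a l * mulc c b (lsub n l) * twist \<theta> l (lsub n l) = c n * (a l * b (lsub n l) * twist \<theta> l (lsub n l))"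
        using cn[of l] by (simp add: mulc_def algebra_simps)
    qed
    also have "\<dots> = mulc c (tmult \<theta> a b) n"
      by (simp add: infsum_cmult_right' mulc_def tmult_lat[OF n])
    finally show ?thesis ..
  qed
qed

lemma lnorm_expand: "lnorm l = \<bar>l 1\<bar> + \<bar>l 2\<bar> + \<bar>l 3\<bar> + \<bar>l 4\<bar>"
  unfolding lnorm_def by (simp add: numeral_eq_Suc atLeastAtMostSuc_conv)

lemma charc_lin:
  assumes "i \<in> {1..4}" "j \<in> {1..4}" "i \<noteq> j" "cmod s = 1"
  shows "charc (\<lambda>l. of_int (l i) + s * of_int (l j))"
  unfolding charc_def
proof (intro conjI allI)
  fix x y show "of_int (lsub x y i) + s * of_int (lsub x y j) = (of_int (x i) + s * of_int (x j)) - (of_int (y i) + s * of_int (y j))"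
    by (simp add: lsub_def algebra_simps)
next
  fix l :: lat
  have "cmod (of_int (l i) + s * of_int (l j)) \<le> cmod (of_int (l i)) + cmod (s * of_int (l j))"
    by (rule norm_triangle_ineq)
  also have "\<dots> = \<bar>real_of_int (l i)\<bar> + \<bar>real_of_int (l j)\<bar>"
    using assms(4) by (simp add: norm_mult)
  also have "\<dots> \<le> real_of_int (lnorm l)"
  proof -
    have "(\<Sum>k\<in>{i,j}. \<bar>l k\<bar>) \<le> (\<Sum>k\<in>{1..4}. \<bar>l k\<bar>)" by (rule sum_mono2) (use assms in auto)
    hence "\<bar>l i\<bar> + \<bar>l j\<bar> \<le> lnorm l" using assms(3) by (simp add: lnorm_def)
    thus ?thesis by (metis of_int_abs of_int_add of_int_le_iff)
  qed
  finally show "cmod (of_int (l i) + s * of_int (l j)) \<le> real_of_int (lnorm l)" .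
qed

definition cd1 :: "lat \<Rightarrow> complex" where "cd1 l = of_int (l 1) + (- \<i>) * of_int (l 3)"
definition cd2 :: "lat \<Rightarrow> complex" where "cd2 l = of_int (l 2) + (- \<i>) * of_int (l 4)"
definition cb1 :: "lat \<Rightarrow> complex" where "cb1 l = of_int (l 1) + \<i> * of_int (l 3)"
definition cb2 :: "lat \<Rightarrow> complex" where "cb2 l = of_int (l 2) + \<i> * of_int (l 4)"

lemma charc_cd1: "charc cd1" unfolding cd1_def by (rule charc_lin) auto
lemma charc_cd2: "charc cd2" unfolding cd2_def by (rule charc_lin) auto
lemma charc_cb1: "charc cb1" unfolding cb1_def by (rule charc_lin) auto
lemma charc_cb2: "charc cb2" unfolding cb2_def by (rule charc_lin) auto

lemma dd1_mulc: "dd1 = mulc cd1" by (simp add: fun_eq_iff dd1_def mulc_def cd1_def delta_def algebra_simps)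
lemma dd2_mulc: "dd2 = mulc cd2" by (simp add: fun_eq_iff dd2_def mulc_def cd2_def delta_def algebra_simps)
lemma dbar1_mulc: "dbar1 = mulc cb1" by (simp add: fun_eq_iff dbar1_def mulc_def cb1_def delta_def algebra_simps)
lemma dbar2_mulc: "dbar2 = mulc cb2" by (simp add: fun_eq_iff dbar2_def mulc_def cb2_def delta_def algebra_simps)

lemma cnj_cd1: "(\<lambda>l. cnj (cd1 l)) = cb1" by (simp add: fun_eq_iff cd1_def cb1_def)
lemma cnj_cd2: "(\<lambda>l. cnj (cd2 l)) = cb2" by (simp add: fun_eq_iff cd2_def cb2_def)
lemma cnj_cb1: "(\<lambda>l. cnj (cb1 l)) = cd1" by (simp add: fun_eq_iff cd1_def cb1_def)
lemma cnj_cb2: "(\<lambda>l. cnj (cb2 l)) = cd2" by (simp add: fun_eq_iff cd2_def cb2_def)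


lemma tscale_tscale: "tscale a (tscale b x) = tscale (a * b) x"
  by (simp add: tscale_def fun_eq_iff)
lemma tscale_one[simp]: "tscale 1 x = x"
  by (simp add: tscale_def fun_eq_iff)

lemma tpow_scale: "tpow \<theta> (tscale s h) k = tscale (s ^ k) (tpow \<theta> h k)"
  by (induction k) (simp_all add: tmult_tscale_left tmult_tscale_right tscale_tscale mult.commute)

lemma tpow_smooth: "smooth h \<Longrightarrow> smooth (tpow \<theta> h k)"
  by (induction k) (simp_all add: smooth_tone smooth_tmult)

lemma tpow_bound:
  assumes h: "smooth h" shows "wt p l * cmod (tpow \<theta> h k l) \<le> wsum p h ^ k"
proof (induction k arbitrary: l)
  case 0 show ?case by (simp add: tone_def)
next
  case (Suc k)
  have "wt p l * cmod (tmult \<theta> h (tpow \<theta> h k) l) \<le> wsum p h * wsum p h ^ k"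
    by (rule conv_bound[OF h Suc.IH])
  thus ?case by simp
qed

lemma tpow_bound0: "smooth h \<Longrightarrow> cmod (tpow \<theta> h k l) \<le> wsum 0 h ^ k"
  using tpow_bound[of h 0] by simp

lemma tpow_bound8: "smooth h \<Longrightarrow> cmod (tpow \<theta> h k l) \<le> wsum 8 h ^ k * gw l"
proof -
  assume h: "smooth h"
  have "wt 8 l * cmod (tpow \<theta> h k l) \<le> wsum 8 h ^ k" by (rule tpow_bound[OF h])
  thus ?thesis unfolding gw_def using wt_pos[of 8 l] by (simp add: field_simps)
qed

lemma tpow_add: "smooth h \<Longrightarrow> tmult \<theta> (tpow \<theta> h p) (tpow \<theta> h q) = tpow \<theta> h (p + q)"
proof (induction p)
  case 0 thus ?case by (simp add: tmult_tone_left smooth_supp tpow_smooth)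
next
  case (Suc p)
  thus ?case by (simp add: tmult_assoc tpow_smooth)
qed

lemma tpow_comm: "smooth h \<Longrightarrow> tmult \<theta> (tpow \<theta> h k) h = tmult \<theta> h (tpow \<theta> h k)"
proof -
  assume h: "smooth h"
  have "tpow \<theta> h 1 = h" by (simp add: tmult_tone_right smooth_supp h)
  hence "tmult \<theta> (tpow \<theta> h k) h = tpow \<theta> h (k + 1)" using tpow_add[OF h, where p=k and q=1 and \<theta>=\<theta>] by simp
  thus ?thesis by simp
qed

lemma tstar_tpow: "smooth h \<Longrightarrow> tstar \<theta> (tpow \<theta> h k) = tpow \<theta> (tstar \<theta> h) k"
proof (induction k)
  case 0 thus ?case by (simp add: tstar_tone)
next
  case (Suc k)
  have "tstar \<theta> (tpow \<theta> h (Suc k)) = tmult \<theta> (tpow \<theta> (tstar \<theta> h) k) (tstar \<theta> h)"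
    using Suc by (simp add: tstar_tmult tpow_smooth)
  also have "\<dots> = tpow \<theta> (tstar \<theta> h) (Suc k)"
    using tpow_comm[OF smooth_tstar[OF Suc.prems]] by simp
  finally show ?case .
qed

lemma tpow_supp: "l \<notin> lat4 \<Longrightarrow> tpow \<theta> h k l = 0"
proof (cases k)
  case 0 assume "l \<notin> lat4" thus ?thesis using 0 by (auto simp: tone_def)
next
  case (Suc k') assume "l \<notin> lat4" thus ?thesis using Suc by (simp add: tmult_supp)
qed

lemma exp_real_sums: "(\<lambda>n. (x::real) ^ n / fact n) sums exp x"
  using exp_converges[of x] by (simp add: divide_inverse mult.commute scaleR_conv_of_real)

lemma exp_real_summable: "summable (\<lambda>n. (x::real) ^ n / fact n)"
  using exp_real_sums sums_summable by blast

lemma texp_coeff_summable: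
  assumes x: "smooth x"
  shows "summable (\<lambda>n. cmod (tpow \<theta> x n l / of_nat (fact n)))"
proof (rule summable_comparison_test'[OF exp_real_summable[of "wsum 0 x"]])
  fix n :: nat
  show "norm (cmod (tpow \<theta> x n l / of_nat (fact n))) \<le> wsum 0 x ^ n / fact n"
    using tpow_bound0[OF x, of \<theta> n l] by (simp add: norm_divide divide_right_mono)
qed

lemma texp_smooth: assumes x: "smooth x" shows "smooth (texp \<theta> x)"
  unfolding smooth_iff[of "texp \<theta> x"]
proof (intro conjI allI impI)
  fix l assume "l \<notin> lat4" thus "texp \<theta> x l = 0" by (simp add: texp_def tpow_supp)
next
  fix p
  { fix l
    let ?f = "\<lambda>n. tpow \<theta> x n l / of_nat (fact n)"
    have s: "summable (\<lambda>n. cmod (?f n))" by (rule texp_coeff_summable[OF x])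
    have "wt p l * cmod (texp \<theta> x l) \<le> wt p l * (\<Sum>n. cmod (?f n))"
      unfolding texp_def by (intro mult_left_mono summable_norm s) simp
    also have "\<dots> = (\<Sum>n. wt p l * cmod (?f n))" by (rule suminf_mult[OF s, symmetric])
    also have "\<dots> \<le> (\<Sum>n. wsum p x ^ n / fact n)"
    proof (rule suminf_le)
      show "summable (\<lambda>n. wt p l * cmod (?f n))" by (rule summable_mult[OF s])
      show "summable (\<lambda>n. wsum p x ^ n / fact n)" by (rule exp_real_summable)
      fix n show "wt p l * cmod (?f n) \<le> wsum p x ^ n / fact n"
        using tpow_bound[OF x, of p l \<theta> n] by (simp add: norm_divide divide_right_mono)
    qed
    finally have "wt p l * cmod (texp \<theta> x l) \<le> (\<Sum>n. wsum p x ^ n / fact n)" . }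
  thus "\<exists>C. \<forall>l. wt p l * cmod (texp \<theta> x l) \<le> C" by blast
qed

lemma tstar_texp:
  assumes x: "smooth x" shows "tstar \<theta> (texp \<theta> x) = texp \<theta> (tstar \<theta> x)"
proof
  fix n
  let ?f = "\<lambda>k. tpow \<theta> x k (lneg n) / of_nat (fact k)"
  let ?C = "cnj (twist \<theta> n (lneg n))"
  have "?f sums (suminf ?f)" by (rule summable_sums[OF summable_norm_cancel[OF texp_coeff_summable[OF x]]])
  hence "(\<lambda>k. cnj (?f k)) sums (cnj (suminf ?f))" by (simp only: sums_cnj)
  hence "(\<lambda>k. cnj (?f k) * ?C) sums (cnj (suminf ?f) * ?C)" by (rule sums_mult2)
  moreover have "(\<lambda>k. cnj (?f k) * ?C) = (\<lambda>k. tpow \<theta> (tstar \<theta> x) k n / of_nat (fact k))"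
  proof
    fix k
    have "tpow \<theta> (tstar \<theta> x) k n = tstar \<theta> (tpow \<theta> x k) n" by (simp add: tstar_tpow x)
    thus "cnj (?f k) * ?C = tpow \<theta> (tstar \<theta> x) k n / of_nat (fact k)"
      by (simp add: tstar_def)
  qed
  ultimately have "(\<lambda>k. tpow \<theta> (tstar \<theta> x) k n / of_nat (fact k)) sums (tstar \<theta> (texp \<theta> x) n)"
    by (simp add: tstar_def texp_def)
  thus "tstar \<theta> (texp \<theta> x) n = texp \<theta> (tstar \<theta> x) n"
    unfolding texp_def[of \<theta> "tstar \<theta> x"] by (simp add: sums_iff)
qed

lemma texp_zero: "texp \<theta> (tscale 0 h) = tone"
proof
  fix l
  have "tpow \<theta> (tscale 0 h) k l = 0 ^ k * tpow \<theta> h k l" for k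
    by (simp only: tpow_scale) (simp add: tscale_def)
  hence "(\<lambda>k. tpow \<theta> (tscale 0 h) k l / of_nat (fact k)) = (\<lambda>k. if k = 0 then tone l else 0)"
    by (auto simp: fun_eq_iff)
  moreover have "(\<lambda>k::nat. if k = 0 then tone l else 0) sums tone l"
    using sums_single[of 0 "\<lambda>_. tone l"] by simp
  ultimately show "texp \<theta> (tscale 0 h) l = tone l"
    unfolding texp_def by (simp add: sums_iff)
qed

lemma infsum_prod_mult:
  fixes f :: "'a \<Rightarrow> complex" and g :: "'b \<Rightarrow> complex"
  assumes f: "f summable_on A" and g: "g summable_on B"
  shows "(\<lambda>(x,y). f x * g y) summable_on A \<times> B"
    and "infsum f A * infsum g B = infsum (\<lambda>(x,y). f x * g y) (A \<times> B)"
proof -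
  have "(\<lambda>(x,y). cmod (f x) * cmod (g y)) summable_on A \<times> B"
    by (rule summable_prod_nonneg[OF cplx_abs_summable[OF f] cplx_abs_summable[OF g]]) auto
  thus S: "(\<lambda>(x,y). f x * g y) summable_on A \<times> B"
    by (rule cplx_summable_cmp) (auto simp: norm_mult)
  have "infsum (\<lambda>(x,y). f x * g y) (A \<times> B) = (\<Sum>\<^sub>\<infinity>x\<in>A. \<Sum>\<^sub>\<infinity>y\<in>B. f x * g y)"
    using infsum_Sigma'_banach[of "\<lambda>x y. f x * g y" A "\<lambda>_. B"] S by simp
  also have "\<dots> = (\<Sum>\<^sub>\<infinity>x\<in>A. f x * infsum g B)" by (simp add: infsum_cmult_right')
  also have "\<dots> = infsum f A * infsum g B" by (simp add: infsum_cmult_left')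
  finally show "infsum f A * infsum g B = infsum (\<lambda>(x,y). f x * g y) (A \<times> B)" ..
qed

lemma suminf_infsum:
  fixes f :: "nat \<Rightarrow> complex"
  assumes "summable (\<lambda>n. cmod (f n))"
  shows "suminf f = infsum f UNIV" and "f summable_on UNIV"
proof -
  have "(f has_sum suminf f) UNIV"
    by (rule norm_summable_imp_has_sum[OF assms summable_sums[OF summable_norm_cancel[OF assms]]])
  thus "suminf f = infsum f UNIV" "f summable_on UNIV" by (auto simp: infsumI summable_on_def)
qed

lemma binom_sum:
  fixes s t :: complex
  shows "(\<Sum>p\<le>N. s ^ p * t ^ (N - p) / (fact p * fact (N - p))) = (s + t) ^ N / fact N"
proof -
  have "(s + t) ^ N / fact N = (\<Sum>k\<le>N. of_nat (N choose k) * s ^ k * t ^ (N - k) / fact N)"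
    by (simp add: binomial_ring sum_divide_distrib)
  also have "\<dots> = (\<Sum>k\<le>N. s ^ k * t ^ (N - k) / (fact k * fact (N - k)))"
  proof (rule sum.cong)
    fix k assume "k \<in> {..N}"
    hence "(of_nat (N choose k) :: complex) = fact N / (fact k * fact (N - k))" by (simp add: binomial_fact)
    thus "of_nat (N choose k) * s ^ k * t ^ (N - k) / fact N = s ^ k * t ^ (N - k) / (fact k * fact (N - k))"
      by (simp add: field_simps)
  qed simp
  finally show ?thesis ..
qed

lemma exp_real_summable_on: "0 \<le> x \<Longrightarrow> (\<lambda>n. (x::real) ^ n / fact n) summable_on UNIV"
  using exp_real_summable[of x] by (subst summable_on_UNIV_nonneg_real_iff) auto

lemma texp_add:
  assumes h: "smooth h"
  shows "tmult \<theta> (texp \<theta> (tscale s h)) (texp \<theta> (tscale t h)) = texp \<theta> (tscale (s + t) h)"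
proof
  fix n
  define M0 where "M0 = wsum 0 h"
  define M8 where "M8 = wsum 8 h"
  have M0: "0 \<le> M0" and M8: "0 \<le> M8" by (simp_all add: M0_def M8_def wsum_nonneg)
  define A where "A u l k = u ^ k * tpow \<theta> h k l / of_nat (fact k)" for u l k
  define \<alpha> where "\<alpha> u M k = (cmod u * M) ^ k / fact k" for u :: complex and M :: real and k :: nat
  have \<alpha>0: "0 \<le> \<alpha> u M k" if "0 \<le> M" for u M k using that by (simp add: \<alpha>_def)
  have \<alpha>s: "\<alpha> u M summable_on UNIV" if "0 \<le> M" for u M
    unfolding \<alpha>_def[abs_def] using that by (intro exp_real_summable_on) simp
  have texpA: "texp \<theta> (tscale u h) l = suminf (A u l)" for u l
  proof -
    have "tpow \<theta> (tscale u h) k l = u ^ k * tpow \<theta> h k l" for k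
      by (simp only: tpow_scale) (simp add: tscale_def)
    thus ?thesis by (simp add: texp_def A_def[abs_def])
  qed
  have Ab0: "cmod (A u l k) \<le> \<alpha> u M0 k" for u l k
  proof -
    have "cmod (A u l k) = cmod u ^ k * cmod (tpow \<theta> h k l) / fact k"
      by (simp add: A_def norm_mult norm_divide norm_power)
    also have "\<dots> \<le> cmod u ^ k * M0 ^ k / fact k"
      using tpow_bound0[OF h, of \<theta> k l] unfolding M0_def
      by (intro divide_right_mono mult_left_mono) auto
    finally show ?thesis by (simp add: \<alpha>_def power_mult_distrib)
  qed
  have Ab8: "cmod (A u l k) \<le> gw l * \<alpha> u M8 k" for u l k
  proof -
    have "cmod (A u l k) = cmod u ^ k * cmod (tpow \<theta> h k l) / fact k"
      by (simp add: A_def norm_mult norm_divide norm_power)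
    also have "\<dots> \<le> cmod u ^ k * (M8 ^ k * gw l) / fact k"
      using tpow_bound8[OF h, of \<theta> k l] unfolding M8_def
      by (intro divide_right_mono mult_left_mono) auto
    finally show ?thesis by (simp add: \<alpha>_def power_mult_distrib mult_ac)
  qed
  have Anorm: "summable (\<lambda>k. cmod (A u l k))" for u l
    by (rule summable_comparison_test'[OF exp_real_summable[of "cmod u * M0"]])
       (use Ab0 in \<open>auto simp: \<alpha>_def power_mult_distrib\<close>)
  have texpA': "texp \<theta> (tscale u h) l = infsum (A u l) UNIV" for u l
    using texpA suminf_infsum(1)[OF Anorm] by simp
  have Aon: "A u l summable_on UNIV" for u l by (rule suminf_infsum(2)[OF Anorm])
  show "tmult \<theta> (texp \<theta> (tscale s h)) (texp \<theta> (tscale t h)) n = texp \<theta> (tscale (s + t) h) n"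
  proof (cases "n \<in> lat4")
    case False
    thus ?thesis using smooth_supp[OF texp_smooth[OF smooth_tscale[OF h]]] by (simp add: tmult_supp)
  next
    case n: True
    define F where "F l pq = A s l (fst pq) * A t (lsub n l) (snd pq) * twist \<theta> l (lsub n l)" for l and pq :: "nat \<times> nat"
    have Fs: "(\<lambda>(l, pq). F l pq) summable_on lat4 \<times> UNIV"
    proof -
      have P1: "(\<lambda>(p,q). \<alpha> s M8 p * \<alpha> t M0 q) summable_on UNIV \<times> UNIV"
        by (rule summable_prod_nonneg[OF \<alpha>s[OF M8] \<alpha>s[OF M0]]) (simp_all add: \<alpha>0 M0 M8)
      have P2: "(\<lambda>(l,pq). gw l * (case pq of (p,q) \<Rightarrow> \<alpha> s M8 p * \<alpha> t M0 q)) summable_on lat4 \<times> (UNIV \<times> UNIV)"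
        by (rule summable_prod_nonneg[OF summable_gw P1]) (auto simp: gw_pos less_imp_le \<alpha>0 M0 M8)
      show ?thesis
      proof (rule cplx_summable_cmp[OF P2[simplified]])
        fix x :: "lat \<times> nat \<times> nat" assume "x \<in> lat4 \<times> UNIV"
        obtain l p q where x: "x = (l, p, q)" by (metis prod.exhaust)
        have "cmod (F l (p, q)) = cmod (A s l p) * cmod (A t (lsub n l) q)"
          by (simp add: F_def norm_mult)
        also have "\<dots> \<le> (gw l * \<alpha> s M8 p) * \<alpha> t M0 q"
          by (intro mult_mono Ab8 Ab0) (auto simp: gw_pos less_imp_le \<alpha>0 M8)
        finally show "cmod ((\<lambda>(l, pq). F l pq) x) \<le> (\<lambda>(l, pq). gw l * (case pq of (p, q) \<Rightarrow> \<alpha> s M8 p * \<alpha> t M0 q)) x"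
          by (simp add: x mult_ac)
      qed
    qed
    define G where "G pq = s ^ fst pq * t ^ snd pq / (fact (fst pq) * fact (snd pq)) * tpow \<theta> h (fst pq + snd pq) n" for pq :: "nat \<times> nat"
    have inner: "(\<Sum>\<^sub>\<infinity>l\<in>lat4. F l pq) = G pq" for pq
    proof -
      obtain p q where pq: "pq = (p, q)" by (metis prod.exhaust)
      have "(\<Sum>\<^sub>\<infinity>l\<in>lat4. F l pq) = (\<Sum>\<^sub>\<infinity>l\<in>lat4. (s ^ p * t ^ q / (fact p * fact q)) * (tpow \<theta> h p l * tpow \<theta> h q (lsub n l) * twist \<theta> l (lsub n l)))"
        by (rule infsum_cong) (simp add: F_def A_def pq field_simps)
      also have "\<dots> = (s ^ p * t ^ q / (fact p * fact q)) * (\<Sum>\<^sub>\<infinity>l\<in>lat4. tpow \<theta> h p l * tpow \<theta> h q (lsub n l) * twist \<theta> l (lsub n l))"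
        by (rule infsum_cmult_right')
      also have "\<dots> = (s ^ p * t ^ q / (fact p * fact q)) * tmult \<theta> (tpow \<theta> h p) (tpow \<theta> h q) n"
        by (simp only: tmult_lat[OF n])
      also have "\<dots> = G pq" by (simp add: tpow_add[OF h] G_def pq)
      finally show ?thesis .
    qed
    have Gs: "G summable_on UNIV"
    proof -
      have P1: "(\<lambda>(p,q). \<alpha> s M0 p * \<alpha> t M0 q) summable_on UNIV \<times> UNIV"
        by (rule summable_prod_nonneg[OF \<alpha>s[OF M0] \<alpha>s[OF M0]]) (simp_all add: \<alpha>0 M0)
      show ?thesis
      proof (rule cplx_summable_cmp[OF P1[simplified]])
        fix x :: "nat \<times> nat"
        obtain p q where x: "x = (p, q)" by (metis prod.exhaust)
        have "cmod (G (p,q)) = (cmod s ^ p / fact p) * (cmod t ^ q / fact q) * cmod (tpow \<theta> h (p+q) n)"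
          by (simp add: G_def norm_mult norm_divide norm_power)
        also have "\<dots> \<le> (cmod s ^ p / fact p) * (cmod t ^ q / fact q) * M0 ^ (p + q)"
          using tpow_bound0[OF h, of \<theta> "p+q" n] unfolding M0_def by (intro mult_left_mono) auto
        also have "\<dots> = \<alpha> s M0 p * \<alpha> t M0 q"
          by (simp add: \<alpha>_def power_mult_distrib power_add)
        finally show "cmod (G x) \<le> (\<lambda>(p, q). \<alpha> s M0 p * \<alpha> t M0 q) x" by (simp add: x)
      qed
    qed
    define T where "T = Sigma (UNIV :: nat set) (\<lambda>N. {..N})"
    define G' where "G' Np = G (snd Np, fst Np - snd Np)" for Np :: "nat \<times> nat"
    have b1: "\<And>x. x \<in> UNIV \<Longrightarrow> (\<lambda>(N::nat,p::nat). (p, N - p)) ((\<lambda>(p::nat,q::nat). (p + q, p)) x) = x" by auto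
    have b2: "\<And>x. x \<in> UNIV \<Longrightarrow> (\<lambda>(p::nat,q::nat). (p + q, p)) x \<in> T" by (auto simp: T_def)
    have b3: "\<And>x. x \<in> T \<Longrightarrow> (\<lambda>(p::nat,q::nat). (p + q, p)) ((\<lambda>(N::nat,p::nat). (p, N - p)) x) = x" by (auto simp: T_def)
    have b4: "\<And>x. x \<in> T \<Longrightarrow> (\<lambda>(N::nat,p::nat). (p, N - p)) x \<in> UNIV" by auto
    have b5: "\<And>x. x \<in> UNIV \<Longrightarrow> G' ((\<lambda>(p::nat,q::nat). (p + q, p)) x) = G x" by (auto simp: G'_def)
    have G's: "G' summable_on T"
      using summable_on_reindex_bij_witness[of UNIV "\<lambda>(N::nat,p::nat). (p, N - p)" "\<lambda>(p::nat,q::nat). (p + q, p)" T G' G, OF b1 b2 b3 b4 b5] Gs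
      by simp
    have GG': "infsum G UNIV = infsum G' T"
      by (rule infsum_reindex_bij_witness[of UNIV "\<lambda>(N::nat,p::nat). (p, N - p)" "\<lambda>(p::nat,q::nat). (p + q, p)" T G' G, OF b1 b2 b3 b4 b5])
    have "tmult \<theta> (texp \<theta> (tscale s h)) (texp \<theta> (tscale t h)) n =
        (\<Sum>\<^sub>\<infinity>l\<in>lat4. infsum (A s l) UNIV * infsum (A t (lsub n l)) UNIV * twist \<theta> l (lsub n l))"
      by (simp add: tmult_lat[OF n] texpA')
    also have "\<dots> = (\<Sum>\<^sub>\<infinity>l\<in>lat4. \<Sum>\<^sub>\<infinity>pq\<in>UNIV. F l pq)"
    proof (rule infsum_cong)
      fix l
      have "infsum (A s l) UNIV * infsum (A t (lsub n l)) UNIV = infsum (\<lambda>(p,q). A s l p * A t (lsub n l) q) (UNIV \<times> UNIV)"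
        by (rule infsum_prod_mult(2)[OF Aon Aon])
      thus "infsum (A s l) UNIV * infsum (A t (lsub n l)) UNIV * twist \<theta> l (lsub n l) = (\<Sum>\<^sub>\<infinity>pq\<in>UNIV. F l pq)"
        by (simp add: infsum_cmult_left'[symmetric] F_def case_prod_unfold)
    qed
    also have "\<dots> = (\<Sum>\<^sub>\<infinity>pq\<in>UNIV. \<Sum>\<^sub>\<infinity>l\<in>lat4. F l pq)"
      by (rule infsum_swap_banach[OF Fs])
    also have "\<dots> = infsum G UNIV" by (simp add: inner)
    also have "\<dots> = infsum G' T" by (rule GG')
    also have "\<dots> = (\<Sum>\<^sub>\<infinity>N\<in>UNIV. \<Sum>\<^sub>\<infinity>p\<in>{..N}. G' (N, p))"
      using infsum_Sigma'_banach[of "\<lambda>N p. G' (N, p)" UNIV "\<lambda>N. {..N}"] G's by (simp add: T_def)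
    also have "\<dots> = (\<Sum>\<^sub>\<infinity>N\<in>UNIV. A (s + t) n N)"
    proof (rule infsum_cong)
      fix N :: nat
      have "(\<Sum>\<^sub>\<infinity>p\<in>{..N}. G' (N, p)) = (\<Sum>p\<le>N. s ^ p * t ^ (N - p) / (fact p * fact (N - p)) * tpow \<theta> h N n)"
        by (simp add: G'_def G_def)
      also have "\<dots> = (\<Sum>p\<le>N. s ^ p * t ^ (N - p) / (fact p * fact (N - p))) * tpow \<theta> h N n"
        by (simp add: sum_distrib_right)
      also have "\<dots> = A (s + t) n N" by (simp add: binom_sum A_def)
      finally show "(\<Sum>\<^sub>\<infinity>p\<in>{..N}. G' (N, p)) = A (s + t) n N" .
    qed
    also have "\<dots> = texp \<theta> (tscale (s + t) h) n" by (simp add: texpA')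
    finally show ?thesis .
  qed
qed


lemma tstar_mulc:
  assumes c: "charc c"
  shows "tstar \<theta> (mulc c a) = tscale (-1) (mulc (\<lambda>l. cnj (c l)) (tstar \<theta> a))"
proof -
  have "mulc (\<lambda>l. cnj (c l)) (tstar \<theta> a) = tscale (-1) (tstar \<theta> (mulc c a))"
    using mulc_tstar[OF charc_cnj[OF c], of \<theta> a] by simp
  hence "tscale (-1) (mulc (\<lambda>l. cnj (c l)) (tstar \<theta> a)) = tscale (-1) (tscale (-1) (tstar \<theta> (mulc c a)))"
    by simp
  thus ?thesis by (simp add: tscale_tscale)
qed

lemma ibp:
  assumes c: "charc c" and a: "smooth a" and b: "smooth b" and Y: "smooth Y"
  shows "phi0 (tmult \<theta> (tmult \<theta> (tstar \<theta> (mulc c a)) (mulc c b)) Y) =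
         phi0 (tmult \<theta> (mulc c (tmult \<theta> Y (mulc (\<lambda>l. cnj (c l)) (tstar \<theta> a)))) b)"
proof -
  define Z where "Z = mulc (\<lambda>l. cnj (c l)) (tstar \<theta> a)"
  have Z: "smooth Z" unfolding Z_def by (intro smooth_mulc charc_cnj c smooth_tstar a)
  have cb: "smooth (mulc c b)" by (rule smooth_mulc[OF c b])
  have YZ: "smooth (tmult \<theta> Y Z)" by (rule smooth_tmult[OF Y Z])
  have "phi0 (tmult \<theta> (tmult \<theta> (tstar \<theta> (mulc c a)) (mulc c b)) Y) = - phi0 (tmult \<theta> (tmult \<theta> Z (mulc c b)) Y)"
    by (simp add: tstar_mulc[OF c] Z_def[symmetric] tmult_tscale_left phi0_tscale)
  also have "phi0 (tmult \<theta> (tmult \<theta> Z (mulc c b)) Y) = phi0 (tmult \<theta> Y (tmult \<theta> Z (mulc c b)))"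
    by (rule phi0_comm)
  also have "\<dots> = phi0 (tmult \<theta> (tmult \<theta> Y Z) (mulc c b))"
    by (simp add: tmult_assoc Y Z cb)
  also have "\<dots> = - phi0 (tmult \<theta> (mulc c (tmult \<theta> Y Z)) b)"
  proof -
    have "0 = phi0 (mulc c (tmult \<theta> (tmult \<theta> Y Z) b))" by (simp add: phi0_mulc c)
    also have "\<dots> = phi0 (tmult \<theta> (mulc c (tmult \<theta> Y Z)) b) + phi0 (tmult \<theta> (tmult \<theta> Y Z) (mulc c b))"
      by (simp add: mulc_tmult[OF c YZ b] phi0_tadd)
    finally show ?thesis by (simp add: eq_neg_iff_add_eq_0 add.commute)
  qed
  finally show ?thesis by (simp add: Z_def)
qed

lemma texp_mult_pairs:
  assumes h: "smooth h"
  shows "tmult \<theta> (texp \<theta> h) (texp \<theta> (tscale (-1) h)) = tone"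
    and "tmult \<theta> (texp \<theta> (tscale (-1) h)) (texp \<theta> h) = tone"
    and "tmult \<theta> (texp \<theta> (tscale (-1) h)) (texp \<theta> (tscale (-1) h)) = texp \<theta> (tscale (-2) h)"
    and "tmult \<theta> (texp \<theta> (tscale (-1) h)) (texp \<theta> (tscale 2 h)) = texp \<theta> h"
    and "tmult \<theta> (texp \<theta> (tscale (-2) h)) (texp \<theta> (tscale 2 h)) = tone"
proof -
  have e: "texp \<theta> h = texp \<theta> (tscale 1 h)" by simp
  show "tmult \<theta> (texp \<theta> h) (texp \<theta> (tscale (-1) h)) = tone"
    unfolding e texp_add[OF h] by (simp add: texp_zero)
  show "tmult \<theta> (texp \<theta> (tscale (-1) h)) (texp \<theta> h) = tone"
    unfolding e texp_add[OF h] by (simp add: texp_zero)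
  show "tmult \<theta> (texp \<theta> (tscale (-1) h)) (texp \<theta> (tscale (-1) h)) = texp \<theta> (tscale (-2) h)"
    unfolding texp_add[OF h] by simp
  show "tmult \<theta> (texp \<theta> (tscale (-1) h)) (texp \<theta> (tscale 2 h)) = texp \<theta> h"
    unfolding texp_add[OF h] by simp
  show "tmult \<theta> (texp \<theta> (tscale (-2) h)) (texp \<theta> (tscale 2 h)) = tone"
    unfolding texp_add[OF h] by (simp add: texp_zero)
qed

lemma texp_sa:
  assumes h: "smooth h" and hsa: "tstar \<theta> h = h" and c: "cnj c = c"
  shows "tstar \<theta> (texp \<theta> (tscale c h)) = texp \<theta> (tscale c h)"
  by (simp add: tstar_texp smooth_tscale h tstar_tscale hsa c)

theorem lemma3p1:
  fixes \<theta> :: "nat \<Rightarrow> nat \<Rightarrow> real" and h :: nct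
  assumes skew: "\<forall>j\<in>{1..4}. \<forall>k\<in>{1..4}. \<theta> j k = - \<theta> k j"
    and hsm: "smooth h"
    and hsa: "tstar \<theta> h = h"
  shows "\<exists>W :: nct \<Rightarrow> nct.
     bij_betw W Csm Csm
   \<and> (\<forall>a\<in>Csm. \<forall>b\<in>Csm. W (tadd a b) = tadd (W a) (W b))
   \<and> (\<forall>a\<in>Csm. \<forall>c. W (tscale c a) = tscale (cnj c) (W a))
   \<and> (\<forall>a\<in>Csm. \<forall>b\<in>Csm. inner0 \<theta> (W a) (W b) = cnj (inner_phi \<theta> h a b))
   \<and> (\<forall>a\<in>Csm. \<exists>y\<in>Csm. W y = Sop \<theta> h (W a) \<and>
        (\<forall>b\<in>Csm. innerK4 \<theta> h (dop b) (dop a) = inner_phi \<theta> h b y))"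
proof -
  define E1 where "E1 = texp \<theta> h"
  define Em1 where "Em1 = texp \<theta> (tscale (-1) h)"
  define E2 where "E2 = texp \<theta> (tscale 2 h)"
  define Em2 where "Em2 = texp \<theta> (tscale (-2) h)"
  have sE1: "smooth E1" unfolding E1_def by (rule texp_smooth[OF hsm])
  have sEm1: "smooth Em1" unfolding Em1_def by (rule texp_smooth[OF smooth_tscale[OF hsm]])
  have sE2: "smooth E2" unfolding E2_def by (rule texp_smooth[OF smooth_tscale[OF hsm]])
  have sEm2: "smooth Em2" unfolding Em2_def by (rule texp_smooth[OF smooth_tscale[OF hsm]])
  note pairs = texp_mult_pairs[OF hsm, of \<theta>, folded E1_def Em1_def E2_def Em2_def]
  have saEm1: "tstar \<theta> Em1 = Em1" unfolding Em1_def by (rule texp_sa[OF hsm hsa]) simp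
  have saEm2: "tstar \<theta> Em2 = Em2" unfolding Em2_def by (rule texp_sa[OF hsm hsa]) simp
  have Csm: "a \<in> Csm \<longleftrightarrow> smooth a" for a by (simp add: Csm_def)
  have supp: "smooth a \<Longrightarrow> (\<And>l. l \<notin> lat4 \<Longrightarrow> a l = 0)" for a by (simp add: smooth_supp)
  define W where "W a = tmult \<theta> Em1 (tstar \<theta> a)" for a
  define V where "V c = tstar \<theta> (tmult \<theta> E1 c)" for c
  have sW: "smooth a \<Longrightarrow> smooth (W a)" for a unfolding W_def by (intro smooth_tmult sEm1 smooth_tstar)
  have sV: "smooth a \<Longrightarrow> smooth (V a)" for a unfolding V_def by (intro smooth_tmult sE1 smooth_tstar)
  have E1W: "tmult \<theta> E1 (W a) = tstar \<theta> a" if a: "smooth a" for a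
  proof -
    have "tmult \<theta> E1 (W a) = tmult \<theta> (tmult \<theta> E1 Em1) (tstar \<theta> a)"
      unfolding W_def by (simp add: tmult_assoc sE1 sEm1 smooth_tstar a)
    also have "\<dots> = tstar \<theta> a" by (simp add: pairs tmult_tone_left supp smooth_tstar a)
    finally show ?thesis .
  qed
  have bij: "bij_betw W Csm Csm"
  proof (rule bij_betw_byWitness[where f' = V])
    show "\<forall>a\<in>Csm. V (W a) = a" by (simp add: Csm V_def E1W tstar_tstar)
    show "\<forall>a'\<in>Csm. W (V a') = a'"
    proof
      fix c assume "c \<in> Csm" hence c: "smooth c" by (simp add: Csm)
      have "W (V c) = tmult \<theta> Em1 (tmult \<theta> E1 c)" by (simp add: W_def V_def tstar_tstar)
      also have "\<dots> = tmult \<theta> (tmult \<theta> Em1 E1) c" by (simp add: tmult_assoc sE1 sEm1 c)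
      also have "\<dots> = c" by (simp add: pairs tmult_tone_left supp c)
      finally show "W (V c) = c" .
    qed
    show "W ` Csm \<subseteq> Csm" using sW by (auto simp: Csm)
    show "V ` Csm \<subseteq> Csm" using sV by (auto simp: Csm)
  qed
  have add: "\<forall>a\<in>Csm. \<forall>b\<in>Csm. W (tadd a b) = tadd (W a) (W b)"
    by (simp add: Csm W_def tstar_tadd tmult_tadd_right sEm1 smooth_tstar)
  have scale: "\<forall>a\<in>Csm. \<forall>c. W (tscale c a) = tscale (cnj c) (W a)"
    by (simp add: W_def tstar_tscale tmult_tscale_right)
  have inner: "\<forall>a\<in>Csm. \<forall>b\<in>Csm. inner0 \<theta> (W a) (W b) = cnj (inner_phi \<theta> h a b)"
  proof (intro ballI)
    fix a b assume "a \<in> Csm" "b \<in> Csm"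
    hence a: "smooth a" and b: "smooth b" by (simp_all add: Csm)
    have as: "smooth (tstar \<theta> a)" and bs: "smooth (tstar \<theta> b)" using a b by (simp_all add: smooth_tstar)
    have "inner0 \<theta> (W a) (W b) = phi0 (tmult \<theta> (tmult \<theta> b Em1) (tmult \<theta> Em1 (tstar \<theta> a)))"
      unfolding inner0_def W_def by (simp add: tstar_tmult sEm1 bs tstar_tstar saEm1)
    also have "\<dots> = phi0 (tmult \<theta> b (tmult \<theta> (tmult \<theta> Em1 Em1) (tstar \<theta> a)))"
      by (simp add: tmult_assoc sEm1 b as smooth_tmult)
    also have "\<dots> = phi0 (tmult \<theta> (tmult \<theta> Em2 (tstar \<theta> a)) b)"
      by (simp add: pairs phi0_comm[of \<theta> b])
    also have "\<dots> = phi0 (tmult \<theta> Em2 (tmult \<theta> (tstar \<theta> a) b))"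
      by (simp add: tmult_assoc sEm2 as b)
    also have "\<dots> = cnj (inner_phi \<theta> h a b)"
      unfolding inner_phi_def Em2_def[symmetric] phi0_tstar[of \<theta>, symmetric]
      by (simp add: tstar_tmult smooth_tmult bs a sEm2 saEm2 tstar_tstar)
    finally show "inner0 \<theta> (W a) (W b) = cnj (inner_phi \<theta> h a b)" .
  qed
  have dd: "\<forall>a\<in>Csm. \<exists>y\<in>Csm. W y = Sop \<theta> h (W a) \<and>
        (\<forall>b\<in>Csm. innerK4 \<theta> h (dop b) (dop a) = inner_phi \<theta> h b y)"
  proof
    fix a assume "a \<in> Csm" hence a: "smooth a" by (simp add: Csm)
    define as where "as = tstar \<theta> a"
    have as: "smooth as" unfolding as_def by (rule smooth_tstar[OF a])
    define T1 where "T1 = mulc cb1 (tmult \<theta> Em1 (mulc cd1 as))"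
    define T2 where "T2 = mulc cd1 (tmult \<theta> Em1 (mulc cb1 as))"
    define T3 where "T3 = mulc cb2 (tmult \<theta> Em1 (mulc cd2 as))"
    define T4 where "T4 = mulc cd2 (tmult \<theta> Em1 (mulc cb2 as))"
    have sT: "smooth T1" "smooth T2" "smooth T3" "smooth T4"
      unfolding T1_def T2_def T3_def T4_def
      by (intro smooth_mulc smooth_tmult sEm1 as charc_cd1 charc_cd2 charc_cb1 charc_cb2)+
    define X where "X = tadd (tadd T1 T2) (tadd T3 T4)"
    have sX: "smooth X" unfolding X_def by (intro smooth_tadd sT)
    define y where "y = tstar \<theta> (tmult \<theta> E2 X)"
    have sy: "smooth y" unfolding y_def by (intro smooth_tstar smooth_tmult sE2 sX)
    have Wy: "W y = tmult \<theta> E1 X"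
    proof -
      have "W y = tmult \<theta> Em1 (tmult \<theta> E2 X)" by (simp add: W_def y_def tstar_tstar)
      also have "\<dots> = tmult \<theta> (tmult \<theta> Em1 E2) X" by (simp add: tmult_assoc sEm1 sE2 sX)
      also have "\<dots> = tmult \<theta> E1 X" by (simp add: pairs)
      finally show ?thesis .
    qed
    have Sop: "Sop \<theta> h (W a) = tmult \<theta> E1 X"
    proof -
      have "Sop \<theta> h (W a) = tadd (tadd (tmult \<theta> E1 T1) (tmult \<theta> E1 T2)) (tadd (tmult \<theta> E1 T3) (tmult \<theta> E1 T4))"
        unfolding Sop_def Let_def E1_def[symmetric] Em1_def[symmetric]
        by (simp add: E1W[OF a] as_def[symmetric] T1_def T2_def T3_def T4_def dd1_mulc dd2_mulc dbar1_mulc dbar2_mulc)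
      also have "\<dots> = tmult \<theta> E1 X"
        by (simp add: X_def tmult_tadd_right sE1 sT smooth_tadd)
      finally show ?thesis .
    qed
    have K: "innerK4 \<theta> h (dop b) (dop a) = inner_phi \<theta> h b y" if "b \<in> Csm" for b
    proof -
      have b: "smooth b" using that by (simp add: Csm)
      have i1: "inner1 \<theta> h (mulc c b) (mulc c a) = phi0 (tmult \<theta> (mulc c (tmult \<theta> Em1 (mulc (\<lambda>l. cnj (c l)) as))) b)"
        if c: "charc c" for c
        unfolding inner1_def Em1_def[symmetric] as_def by (rule ibp[OF c a b sEm1])
      have "innerK4 \<theta> h (dop b) (dop a) =
          inner1 \<theta> h (mulc cd1 b) (mulc cd1 a) + inner1 \<theta> h (mulc cd2 b) (mulc cd2 a) +
          inner1 \<theta> h (mulc cb1 b) (mulc cb1 a) + inner1 \<theta> h (mulc cb2 b) (mulc cb2 a)"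
        by (simp add: innerK4_def dop_def numeral_eq_Suc lessThan_Suc dd1_mulc dd2_mulc dbar1_mulc dbar2_mulc add_ac)
      also have "\<dots> = phi0 (tmult \<theta> T2 b) + phi0 (tmult \<theta> T4 b) + phi0 (tmult \<theta> T1 b) + phi0 (tmult \<theta> T3 b)"
        by (simp add: i1 charc_cd1 charc_cd2 charc_cb1 charc_cb2 cnj_cd1 cnj_cd2 cnj_cb1 cnj_cb2 T1_def T2_def T3_def T4_def)
      also have "\<dots> = phi0 (tmult \<theta> X b)"
        by (simp add: X_def tmult_tadd_left sT smooth_tadd b phi0_tadd add_ac)
      also have "\<dots> = phi0 (tmult \<theta> (tmult \<theta> (tmult \<theta> Em2 E2) X) b)"
        by (simp add: pairs tmult_tone_left supp sX)
      also have "\<dots> = phi0 (tmult \<theta> Em2 (tmult \<theta> (tmult \<theta> E2 X) b))"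
        by (simp add: tmult_assoc sEm2 sE2 sX b smooth_tmult)
      also have "\<dots> = phi0 (tmult \<theta> (tmult \<theta> (tmult \<theta> E2 X) b) Em2)"
        by (rule phi0_comm)
      also have "\<dots> = inner_phi \<theta> h b y"
        unfolding inner_phi_def Em2_def[symmetric] by (simp add: y_def tstar_tstar)
      finally show ?thesis .
    qed
    show "\<exists>y\<in>Csm. W y = Sop \<theta> h (W a) \<and> (\<forall>b\<in>Csm. innerK4 \<theta> h (dop b) (dop a) = inner_phi \<theta> h b y)"
      using sy Wy Sop K by (auto simp: Csm)
  qed
  show ?thesis using bij add scale inner dd by blast
qed

end
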